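(* Let $k\geq 2$ be an integer, let $c_0>0$ be a sufficiently large constant, and suppose that $c_0k^2/n\leq p\leq 1/2$. Then with probability $1-o(1)$ as $n\to\infty$, $$\mathrm{SDP}_k(G(n,p))\geq\Big(1-\frac1k\Big)\binom n2 p+c_1n^{3/2}p^{1/2}$$ for some constant $c_1>0$.
   Context: $G(n,p)$ is the random graph on $V=\{1,\dots,n\}$ with each possible edge present independently with probability $p$. For a graph $G$ with adjacency matrix $A=(a_{ij})$, the Frieze–Jerrum semidefinite relaxation of MAX $k$-CUT is $$\mathrm{SDP}_k(G)=\max\sum_{i<j}a_{ij}\frac{k-1}{k}\big(1-\langle v_i,v_j\rangle\big)$$ over all $v_1,\dots,v_n\in\mathbb R^n$ with $\|v_i\|=1$ for all $i$ and $\langle v_i,v_j\rangle\geq-\frac{1}{k-1}$ for all $i,j$. *)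

theory Defs
  imports "HOL-Probability.Probability"
begin

definition pairs :: "nat \<Rightarrow> (nat \<times> nat) set" where
  "pairs n = {(i, j). 1 \<le> i \<and> i < j \<and> j \<le> n}"

lemma finite_pairs: "finite (pairs n)"
  by (rule finite_subset[of _ "{1..n} \<times> {1..n}"]) (auto simp: pairs_def)

text \<open>A graph on {1..n} is represented by its adjacency indicator on pairs i<j
  (value False outside pairs n). G(n,p): each pair independently present with prob. p.\<close>
definition gnp :: "nat \<Rightarrow> real \<Rightarrow> (nat \<times> nat \<Rightarrow> bool) pmf" where
  "gnp n p = Pi_pmf (pairs n) False (\<lambda>_. bernoulli_pmf p)"

definition inner_n :: "nat \<Rightarrow> (nat \<Rightarrow> real) \<Rightarrow> (nat \<Rightarrow> real) \<Rightarrow> real" where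
  "inner_n n x y = (\<Sum>t\<in>{1..n}. x t * y t)"

definition fj_feasible :: "nat \<Rightarrow> nat \<Rightarrow> (nat \<Rightarrow> nat \<Rightarrow> real) \<Rightarrow> bool" where
  "fj_feasible n k v \<longleftrightarrow>
     (\<forall>i\<in>{1..n}. inner_n n (v i) (v i) = 1) \<and>
     (\<forall>i\<in>{1..n}. \<forall>j\<in>{1..n}. inner_n n (v i) (v j) \<ge> - 1 / (real k - 1))"

definition fj_objective :: "nat \<Rightarrow> nat \<Rightarrow> (nat \<times> nat \<Rightarrow> bool) \<Rightarrow> (nat \<Rightarrow> nat \<Rightarrow> real) \<Rightarrow> real" where
  "fj_objective n k G v =
     (\<Sum>(i, j)\<in>pairs n. (if G (i, j) then 1 else 0) * ((real k - 1) / real k) * (1 - inner_n n (v i) (v j)))"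

text \<open>SDP_k(G): the optimum (supremum, attained by compactness) of the relaxation.\<close>
definition SDP :: "nat \<Rightarrow> nat \<Rightarrow> (nat \<times> nat \<Rightarrow> bool) \<Rightarrow> real" where
  "SDP n k G = Sup (fj_objective n k G ` {v. fj_feasible n k v})"

end

theory Submission
  imports Defs "HOL-Real_Asymp.Real_Asymp"
begin

definition ind :: "bool \<Rightarrow> real" where "ind b = (if b then 1 else 0)"

lemma ind_simps[simp]: "ind True = 1" "ind False = 0" by (simp_all add: ind_def)
lemma ind_nonneg[simp]: "0 \<le> ind b" by (simp add: ind_def)
lemma ind_le1[simp]: "ind b \<le> 1" by (simp add: ind_def)
lemma ind_sq[simp]: "ind b * ind b = ind b" "(ind b)^2 = ind b" by (simp_all add: ind_def power2_eq_square)
lemma ind_and: "ind (a \<and> b) = ind a * ind b" by (simp add: ind_def)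
lemma ind_not: "ind (\<not> a) = 1 - ind a" by (simp add: ind_def)

definition dep :: "(('a \<Rightarrow> bool) \<Rightarrow> real) \<Rightarrow> 'a set \<Rightarrow> bool" where
  "dep F A \<longleftrightarrow> (\<forall>x y. (\<forall>e\<in>A. x e = y e) \<longrightarrow> F x = F y)"

lemma finite_set_Pi_pmf_bool:
  assumes "finite S"
  shows "finite (set_pmf (Pi_pmf S (d::bool) P))"
proof -
  have "set_pmf (Pi_pmf S d P) \<subseteq> {f. \<forall>x. x \<notin> S \<longrightarrow> f x = d}"
    by (rule set_Pi_pmf_subset[OF assms])
  hence "set_pmf (Pi_pmf S d P) \<subseteq> PiE_dflt S d (\<lambda>_. UNIV)"
    by (auto simp: PiE_dflt_def)
  moreover have "finite (PiE_dflt S d (\<lambda>_. (UNIV::bool set)))"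
    using assms by (intro finite_PiE_dflt) auto
  ultimately show ?thesis by (rule finite_subset)
qed

lemma E_pair_prod:
  fixes F :: "'a \<Rightarrow> real" and G :: "'b \<Rightarrow> real"
  assumes "finite (set_pmf M)" "finite (set_pmf N)"
  shows "measure_pmf.expectation (pair_pmf M N) (\<lambda>z. F (fst z) * G (snd z)) =
         measure_pmf.expectation M F * measure_pmf.expectation N G"
proof -
  have "measure_pmf.expectation (pair_pmf M N) (\<lambda>z. F (fst z) * G (snd z)) =
        (\<Sum>z\<in>set_pmf M \<times> set_pmf N. F (fst z) * G (snd z) * pmf (pair_pmf M N) z)"
    using assms by (intro integral_measure_pmf_real) auto
  also have "\<dots> = (\<Sum>(a,b)\<in>set_pmf M \<times> set_pmf N. (F a * pmf M a) * (G b * pmf N b))"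
    by (intro sum.cong) (auto simp: pmf_pair)
  also have "\<dots> = (\<Sum>a\<in>set_pmf M. \<Sum>b\<in>set_pmf N. (F a * pmf M a) * (G b * pmf N b))"
    by (simp add: sum.cartesian_product)
  also have "\<dots> = (\<Sum>a\<in>set_pmf M. F a * pmf M a) * (\<Sum>b\<in>set_pmf N. G b * pmf N b)"
    by (simp add: sum_product)
  also have "(\<Sum>a\<in>set_pmf M. F a * pmf M a) = measure_pmf.expectation M F"
    using assms by (intro integral_measure_pmf_real[symmetric]) auto
  also have "(\<Sum>b\<in>set_pmf N. G b * pmf N b) = measure_pmf.expectation N G"
    using assms by (intro integral_measure_pmf_real[symmetric]) auto
  finally show ?thesis .
qed

lemma E_split:
  fixes F G :: "('a \<Rightarrow> bool) \<Rightarrow> real"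
  assumes S: "finite S" and A: "A \<subseteq> S" and B: "B \<subseteq> S - A"
    and F: "dep F A" and G: "dep G B"
  shows "measure_pmf.expectation (Pi_pmf S False P) (\<lambda>x. F x * G x) =
         measure_pmf.expectation (Pi_pmf A False P) F * measure_pmf.expectation (Pi_pmf (S - A) False P) G"
proof -
  have fA: "finite A" using S A finite_subset by blast
  have fB: "finite (S - A)" using S by auto
  have SU: "S = A \<union> (S - A)" using A by auto
  define mg where "mg = (\<lambda>(f::'a\<Rightarrow>bool,g::'a\<Rightarrow>bool) x. if x \<in> A then f x else g x)"
  have "Pi_pmf S False P = map_pmf mg (pair_pmf (Pi_pmf A False P) (Pi_pmf (S - A) False P))"
    unfolding mg_def by (subst SU, subst Pi_pmf_union) (use fA fB in auto)
  hence "measure_pmf.expectation (Pi_pmf S False P) (\<lambda>x. F x * G x) =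
         measure_pmf.expectation (pair_pmf (Pi_pmf A False P) (Pi_pmf (S - A) False P)) (\<lambda>z. F (mg z) * G (mg z))"
    by simp
  also have "\<dots> = measure_pmf.expectation (pair_pmf (Pi_pmf A False P) (Pi_pmf (S - A) False P)) (\<lambda>z. F (fst z) * G (snd z))"
  proof (intro Bochner_Integration.integral_cong refl)
    fix z :: "('a \<Rightarrow> bool) \<times> ('a \<Rightarrow> bool)"
    have "F (mg z) = F (fst z)" using F unfolding dep_def mg_def by (cases z) auto
    moreover have "\<forall>e\<in>B. mg z e = snd z e" using B unfolding mg_def by (cases z) auto
    hence "G (mg z) = G (snd z)" using G unfolding dep_def by blast
    ultimately show "F (mg z) * G (mg z) = F (fst z) * G (snd z)" by simp
  qed
  also have "\<dots> = measure_pmf.expectation (Pi_pmf A False P) F * measure_pmf.expectation (Pi_pmf (S - A) False P) G"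
    by (rule E_pair_prod) (use fA fB finite_set_Pi_pmf_bool in blast)+
  finally show ?thesis .
qed

lemma dep_const[simp]: "dep (\<lambda>_. c) A" by (simp add: dep_def)

lemma E_indep:
  fixes F G :: "('a \<Rightarrow> bool) \<Rightarrow> real"
  assumes S: "finite S" and A: "A \<subseteq> S" and B: "B \<subseteq> S" and AB: "A \<inter> B = {}"
    and F: "dep F A" and G: "dep G B"
  shows "measure_pmf.expectation (Pi_pmf S False P) (\<lambda>x. F x * G x) =
         measure_pmf.expectation (Pi_pmf S False P) F * measure_pmf.expectation (Pi_pmf S False P) G"
proof -
  have B': "B \<subseteq> S - A" using B AB by auto
  have 1: "measure_pmf.expectation (Pi_pmf S False P) F = measure_pmf.expectation (Pi_pmf A False P) F * measure_pmf.expectation (Pi_pmf (S - A) False P) (\<lambda>_. 1)"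
    using E_split[OF S A B' F dep_const[of 1 B]] by simp
  have 2: "measure_pmf.expectation (Pi_pmf S False P) G = measure_pmf.expectation (Pi_pmf A False P) (\<lambda>_. 1) * measure_pmf.expectation (Pi_pmf (S - A) False P) G"
    using E_split[OF S A B' dep_const[of 1 A] G] by simp
  show ?thesis using E_split[OF S A B' F G] 1 2 by simp
qed

locale pg = fixes S :: "'a set" and q :: real
  assumes finS: "finite S" and q0: "0 \<le> q" and q1: "q \<le> 1"
begin

abbreviation "M \<equiv> Pi_pmf S False (\<lambda>_. bernoulli_pmf q)"
abbreviation E :: "(('a \<Rightarrow> bool) \<Rightarrow> real) \<Rightarrow> real" where "E f \<equiv> measure_pmf.expectation M f"
abbreviation "Pr A \<equiv> measure_pmf.prob M A"

lemma finM: "finite (set_pmf M)" by (rule finite_set_Pi_pmf_bool[OF finS])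

lemma integ[simp, intro]: "integrable (measure_pmf M) (f :: ('a \<Rightarrow> bool) \<Rightarrow> real)"
  by (rule integrable_measure_pmf_finite[OF finM])

lemma E_add: "E (\<lambda>x. f x + g x) = E f + E g" by (rule Bochner_Integration.integral_add) auto
lemma E_diff: "E (\<lambda>x. f x - g x) = E f - E g" by (rule Bochner_Integration.integral_diff) auto
lemma E_cmult: "E (\<lambda>x. c * f x) = c * E f" by simp
lemma E_multc: "E (\<lambda>x. f x * c) = E f * c" by simp
lemma E_const: "E (\<lambda>x. c) = c" by simp
lemma E_sum: "E (\<lambda>x. \<Sum>i\<in>I. f i x) = (\<Sum>i\<in>I. E (f i))"
  by (rule Bochner_Integration.integral_sum) auto
lemma E_mono: "(\<And>x. f x \<le> g x) \<Longrightarrow> E f \<le> E g"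
  by (rule integral_mono) auto
lemma E_nonneg: "(\<And>x. 0 \<le> f x) \<Longrightarrow> 0 \<le> E f"
  by (rule integral_nonneg_AE) auto
lemma E_abs: "\<bar>E f\<bar> \<le> E (\<lambda>x. \<bar>f x\<bar>)"
  by (rule integral_abs_bound)

lemma indep: "A \<subseteq> S \<Longrightarrow> B \<subseteq> S \<Longrightarrow> A \<inter> B = {} \<Longrightarrow> dep F A \<Longrightarrow> dep G B \<Longrightarrow>
   E (\<lambda>x. F x * G x) = E F * E G"
  by (rule E_indep[OF finS])

lemma E_ind: assumes "e \<in> S" shows "E (\<lambda>x. ind (x e)) = q"
proof -
  have "map_pmf (\<lambda>f. f e) M = bernoulli_pmf q" using assms finS by (simp add: Pi_pmf_component)
  hence "E (\<lambda>x. ind (x e)) = measure_pmf.expectation (bernoulli_pmf q) ind"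
    by (metis integral_map_pmf)
  also have "\<dots> = q" using q0 q1 by simp
  finally show ?thesis .
qed

lemma Markov: assumes "\<And>x. 0 \<le> f x" "0 < c" shows "Pr {x. c \<le> f x} \<le> E f / c"
  using integral_Markov_inequality_measure[of "measure_pmf M" f "UNIV" c] assms by simp

lemma Cheb: assumes "0 < a" shows "Pr {x. a \<le> \<bar>f x\<bar>} \<le> E (\<lambda>x. (f x)\<^sup>2) / a\<^sup>2"
  using measure_pmf.second_moment_method[of f "M" a] assms by simp

lemma second_moment:
  fixes X :: "'i \<Rightarrow> ('a \<Rightarrow> bool) \<Rightarrow> real"
  assumes I: "finite I" and ind: "\<And>i j. i \<in> I \<Longrightarrow> j \<in> I \<Longrightarrow> i \<noteq> j \<Longrightarrow> E (\<lambda>x. X i x * X j x) = E (X i) * E (X j)"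
  shows "E (\<lambda>x. (\<Sum>i\<in>I. X i x)\<^sup>2) = (\<Sum>i\<in>I. E (\<lambda>x. (X i x)\<^sup>2) - (E (X i))\<^sup>2) + (\<Sum>i\<in>I. E (X i))\<^sup>2"
proof -
  have "E (\<lambda>x. (\<Sum>i\<in>I. X i x)\<^sup>2) = E (\<lambda>x. \<Sum>i\<in>I. \<Sum>j\<in>I. X i x * X j x)"
    by (simp add: power2_eq_square sum_product)
  also have "\<dots> = (\<Sum>i\<in>I. \<Sum>j\<in>I. E (\<lambda>x. X i x * X j x))"
    by (simp add: E_sum)
  also have "\<dots> = (\<Sum>i\<in>I. \<Sum>j\<in>I. E (X i) * E (X j) + (if i = j then E (\<lambda>x. (X i x)\<^sup>2) - (E (X i))\<^sup>2 else 0))"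
    using ind by (intro sum.cong refl) (auto simp: power2_eq_square)
  also have "\<dots> = (\<Sum>i\<in>I. \<Sum>j\<in>I. E (X i) * E (X j)) + (\<Sum>i\<in>I. E (\<lambda>x. (X i x)\<^sup>2) - (E (X i))\<^sup>2)"
    using I by (simp only: sum.distrib sum.delta if_True refl) simp
  also have "(\<Sum>i\<in>I. \<Sum>j\<in>I. E (X i) * E (X j)) = (\<Sum>i\<in>I. E (X i))\<^sup>2"
    by (simp add: power2_eq_square sum_product)
  finally show ?thesis by simp
qed

lemma var_bound:
  fixes X :: "'i \<Rightarrow> ('a \<Rightarrow> bool) \<Rightarrow> real"
  assumes I: "finite I" and ind: "\<And>i j. i \<in> I \<Longrightarrow> j \<in> I \<Longrightarrow> i \<noteq> j \<Longrightarrow> E (\<lambda>x. X i x * X j x) = E (X i) * E (X j)"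
  shows "E (\<lambda>x. ((\<Sum>i\<in>I. X i x) - (\<Sum>i\<in>I. E (X i)))\<^sup>2) = (\<Sum>i\<in>I. E (\<lambda>x. (X i x)\<^sup>2) - (E (X i))\<^sup>2)"
proof -
  define c where "c = (\<Sum>i\<in>I. E (X i))"
  have "E (\<lambda>x. ((\<Sum>i\<in>I. X i x) - c)\<^sup>2) = E (\<lambda>x. (\<Sum>i\<in>I. X i x)\<^sup>2 - 2 * c * (\<Sum>i\<in>I. X i x) + c\<^sup>2)"
    by (simp add: power2_diff)
  also have "\<dots> = E (\<lambda>x. (\<Sum>i\<in>I. X i x)\<^sup>2) - 2 * c * E (\<lambda>x. \<Sum>i\<in>I. X i x) + c\<^sup>2"
    by (simp add: E_add E_diff)
  also have "E (\<lambda>x. \<Sum>i\<in>I. X i x) = c" by (simp add: E_sum c_def)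
  finally show ?thesis using second_moment[OF I ind] by (simp add: c_def power2_eq_square)
qed


lemma hoeff:
  fixes T :: "'t set" and K :: "'t \<Rightarrow> 'a set" and g :: "'t \<Rightarrow> ('a \<Rightarrow> bool) \<Rightarrow> real"
  assumes T: "finite T" "T \<noteq> {}" and K: "\<And>t. t \<in> T \<Longrightarrow> K t \<subseteq> S"
    and disj: "disjoint_family_on K T"
    and meas: "\<And>t. t \<in> T \<Longrightarrow> g t \<in> borel_measurable (PiM (K t) (\<lambda>_. count_space UNIV))"
    and bnd: "\<And>t x. t \<in> T \<Longrightarrow> 0 \<le> g t x \<and> g t x \<le> 1"
    and tau: "0 \<le> \<tau>"
  shows "Pr {x. (\<Sum>t\<in>T. g t (restrict x (K t))) \<le> (\<Sum>t\<in>T. E (\<lambda>x. g t (restrict x (K t)))) - \<tau>}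
           \<le> exp (-2 * \<tau>\<^sup>2 / card T)"
    and "Pr {x. (\<Sum>t\<in>T. g t (restrict x (K t))) \<ge> (\<Sum>t\<in>T. E (\<lambda>x. g t (restrict x (K t)))) + \<tau>}
           \<le> exp (-2 * \<tau>\<^sup>2 / card T)"
proof -
  have i1: "prob_space.indep_vars (measure_pmf M) (\<lambda>_. count_space UNIV) (\<lambda>x f. f x) S"
    by (rule indep_vars_Pi_pmf[OF finS])
  have i2: "prob_space.indep_vars (measure_pmf M) (\<lambda>t. PiM (K t) (\<lambda>_. count_space UNIV))
              (\<lambda>t \<omega>. restrict (\<lambda>i. \<omega> i) (K t)) T"
    by (rule prob_space.indep_vars_restrict[OF measure_pmf.prob_space_axioms i1 K disj])
  have i3: "prob_space.indep_vars (measure_pmf M) (\<lambda>_. borel)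
              (\<lambda>t \<omega>. g t (restrict (\<lambda>i. \<omega> i) (K t))) T"
    by (rule prob_space.indep_vars_compose2[OF measure_pmf.prob_space_axioms i2 meas])
  interpret H: Hoeffding_ineq "measure_pmf M" T "\<lambda>t x. g t (restrict x (K t))" "\<lambda>_. 0" "\<lambda>_. 1"
     "\<Sum>t\<in>T. E (\<lambda>x. g t (restrict x (K t)))"
  proof unfold_locales
    show "finite T" by fact
    show "prob_space.indep_vars (measure_pmf M) (\<lambda>_. borel) (\<lambda>t x. g t (restrict x (K t))) T"
      using i3 by simp
    fix t assume "t \<in> T"
    thus "AE x in measure_pmf M. g t (restrict x (K t)) \<in> {0..1}" using bnd by auto
  qed simp
  have pos: "(\<Sum>t\<in>T. ((\<lambda>_. 1::real) t - (\<lambda>_. 0) t)\<^sup>2) > 0" using T by (simp add: card_gt_0_iff)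
  have c: "(\<Sum>t\<in>T. ((\<lambda>_. 1::real) t - (\<lambda>_. 0) t)\<^sup>2) = card T" by simp
  show "Pr {x. (\<Sum>t\<in>T. g t (restrict x (K t))) \<le> (\<Sum>t\<in>T. E (\<lambda>x. g t (restrict x (K t)))) - \<tau>}
           \<le> exp (-2 * \<tau>\<^sup>2 / card T)"
    using H.Hoeffding_ineq_le[OF tau pos] unfolding c by simp
  show "Pr {x. (\<Sum>t\<in>T. g t (restrict x (K t))) \<ge> (\<Sum>t\<in>T. E (\<lambda>x. g t (restrict x (K t)))) + \<tau>}
           \<le> exp (-2 * \<tau>\<^sup>2 / card T)"
    using H.Hoeffding_ineq_ge[OF tau pos] unfolding c by simp
qed

end

locale gs = fixes n :: nat and q :: real
  assumes q_pos: "0 < q" and q_half: "q \<le> 1/2" and n2: "2 \<le> n"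
begin

sublocale pg "pairs n" q
  using q_pos q_half by unfold_locales (auto simp: finite_pairs)

definition "h = n div 2"
definition "L = {1..h}"
definition "R = {h+1..n}"
definition "r = n - h"
definition "Ai i = Pair i ` R"
definition "LL = {(i,j). i \<in> L \<and> j \<in> L \<and> i < j}"
definition "LR = {(i,j). i \<in> L \<and> j \<in> R}"

lemma h_pos: "1 \<le> h" using n2 by (simp add: h_def)
lemma h_le: "h \<le> n" by (simp add: h_def)
lemma r_pos: "1 \<le> r" using n2 by (simp add: r_def h_def)
lemma card_L[simp]: "card L = h" by (simp add: L_def)
lemma card_R[simp]: "card R = r" by (simp add: R_def r_def)
lemma fin_L[simp]: "finite L" by (simp add: L_def)
lemma fin_R[simp]: "finite R" by (simp add: R_def)
lemma LR_disj: "i \<in> L \<Longrightarrow> i \<notin> R" by (simp add: L_def R_def)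
lemma r_le: "r \<le> n" by (simp add: r_def)
lemma hr_ge: "real n ^ 2 / 8 \<le> real h * real r"
proof -
  have "real n \<le> 2 * real h + 1" "real n \<le> 2 * real r" "2 * real h \<le> real n" "real r = real n - real h"
    using n2 by (auto simp: h_def r_def)
  moreover have "1 \<le> real h" using h_pos by simp
  ultimately have "real n / 4 \<le> real h" "real n / 2 \<le> real r" by linarith+
  hence "(real n / 4) * (real n / 2) \<le> real h * real r" by (intro mult_mono) auto
  thus ?thesis by (simp add: power2_eq_square)
qed
lemma pair_LR: "i \<in> L \<Longrightarrow> t \<in> R \<Longrightarrow> (i,t) \<in> pairs n"
  by (auto simp: L_def R_def pairs_def)
lemma Ai_sub: "i \<in> L \<Longrightarrow> Ai i \<subseteq> pairs n" by (auto simp: Ai_def pair_LR)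
lemma Ai_disj: "i \<noteq> j \<Longrightarrow> Ai i \<inter> Ai j = {}" by (auto simp: Ai_def)
lemma fin_Ai[simp]: "finite (Ai i)" by (simp add: Ai_def)
lemma LL_sub: "LL \<subseteq> pairs n" by (auto simp: LL_def L_def pairs_def h_def)
lemma fin_LL[simp]: "finite LL" using LL_sub finite_pairs finite_subset by blast
lemma LR_sub: "LR \<subseteq> pairs n" by (auto simp: LR_def pair_LR)
lemma LL_LR: "LL \<inter> LR = {}" by (auto simp: LL_def LR_def dest: LR_disj)
lemma Ai_LR: "i \<in> L \<Longrightarrow> Ai i \<subseteq> LR" by (auto simp: Ai_def LR_def)

definition "dg G i = (\<Sum>t\<in>R. ind (G (i,t)))"
definition "Bv G i t = ind (G (i,t)) - q"
definition "sv G i = (\<Sum>t\<in>R. (Bv G i t)\<^sup>2)"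
definition "eps = 1 / sqrt (real n * q)"
definition "phi G i = eps / sqrt (1 + eps\<^sup>2 * sv G i)"
definition "alpha G i = 1 / sqrt (1 + eps\<^sup>2 * sv G i)"
definition "Xc G i j = (\<Sum>t\<in>R. Bv G i t * Bv G j t)"
definition "Z G i j = phi G i * phi G j * Xc G i j"
definition "codeg G i j = (\<Sum>t\<in>R. ind (G (i,t) \<and> G (j,t)))"
definition "medges G = (\<Sum>e\<in>pairs n. ind (G e))"

lemma eps_pos: "0 < eps" using q_pos n2 by (simp add: eps_def)
lemma eps_sq: "eps\<^sup>2 = 1 / (real n * q)" using q_pos n2 by (simp add: eps_def power_divide)
lemma sv_nonneg: "0 \<le> sv G i" by (simp add: sv_def sum_nonneg)
lemma phi_nonneg: "0 \<le> phi G i" using eps_pos sv_nonneg[of G i] by (auto simp: phi_def intro!: divide_nonneg_nonneg)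
lemma phi_le: "phi G i \<le> eps"
proof -
  have "1 \<le> sqrt (1 + eps\<^sup>2 * sv G i)" using sv_nonneg[of G i] by simp
  thus ?thesis using eps_pos unfolding phi_def by (simp add: divide_le_eq)
qed
lemma Bv_abs: "\<bar>Bv G i t\<bar> \<le> 1" using q_pos q_half by (simp add: Bv_def ind_def)
lemma Bv_sq: "(Bv G i t)\<^sup>2 = ind (G (i,t)) * (1 - 2*q) + q\<^sup>2"
  by (simp add: Bv_def ind_def power2_eq_square algebra_simps)
lemma sv_dg: "sv G i = dg G i * (1 - 2*q) + real r * q\<^sup>2"
  by (simp add: sv_def Bv_sq dg_def sum.distrib sum_distrib_right)
lemma dg_nonneg: "0 \<le> dg G i" by (simp add: dg_def sum_nonneg)
lemma dg_le: "dg G i \<le> r"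
proof -
  have "dg G i \<le> (\<Sum>t\<in>R. 1)" unfolding dg_def by (rule sum_mono) simp
  thus ?thesis by simp
qed

lemma dep_ind: "dep (\<lambda>G. ind (G e)) {e}" by (simp add: dep_def)
lemma dep_dg: "dep (\<lambda>G. dg G i) (Ai i)" by (auto simp: dep_def dg_def Ai_def intro!: sum.cong)
lemma dep_sv: "dep (\<lambda>G. sv G i) (Ai i)" by (auto simp: dep_def sv_def Bv_def Ai_def intro!: sum.cong)
lemma dep_mono: "dep F A \<Longrightarrow> A \<subseteq> B \<Longrightarrow> dep F B" by (auto simp: dep_def)
lemma dep_mult: "dep F A \<Longrightarrow> dep G A \<Longrightarrow> dep (\<lambda>x. F x * G x) A" unfolding dep_def by metis
lemma dep_add: "dep F A \<Longrightarrow> dep G A \<Longrightarrow> dep (\<lambda>x. F x + G x) A" unfolding dep_def by metis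
lemma dep_comp: "dep F A \<Longrightarrow> dep (\<lambda>x. f (F x)) A" unfolding dep_def by metis
lemma dep_phi: "dep (\<lambda>G. phi G i) (Ai i)"
  using dep_comp[OF dep_sv[of i], of "\<lambda>s. eps / sqrt (1 + eps\<^sup>2 * s)"] by (simp add: phi_def)
lemma dep_Bv: "dep (\<lambda>G. Bv G i t) {(i,t)}" by (simp add: dep_def Bv_def)

lemma E_ind_pair: "i \<in> L \<Longrightarrow> t \<in> R \<Longrightarrow> E (\<lambda>G. ind (G (i,t))) = q"
  by (rule E_ind) (rule pair_LR)
lemma E_Bv: "i \<in> L \<Longrightarrow> t \<in> R \<Longrightarrow> E (\<lambda>G. Bv G i t) = 0"
  by (simp add: Bv_def E_diff E_ind_pair)
lemma E_Bv_sq: assumes "i \<in> L" "t \<in> R" shows "E (\<lambda>G. (Bv G i t)\<^sup>2) = q * (1 - q)"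
proof -
  have "E (\<lambda>G. (Bv G i t)\<^sup>2) = E (\<lambda>G. ind (G (i,t)) * (1 - 2*q) + q\<^sup>2)" by (simp only: Bv_sq)
  also have "\<dots> = q * (1 - 2*q) + q\<^sup>2" by (simp only: E_add E_multc E_const E_ind_pair assms)
  finally show ?thesis by (simp add: power2_eq_square algebra_simps)
qed

lemma E_dg: "i \<in> L \<Longrightarrow> E (\<lambda>G. dg G i) = r * q"
  by (simp add: dg_def E_sum E_ind_pair)

lemma var_dg: assumes i: "i \<in> L" shows "E (\<lambda>G. (dg G i - r * q)\<^sup>2) = r * q * (1 - q)"
proof -
  have "E (\<lambda>G. ((\<Sum>t\<in>R. ind (G (i,t))) - (\<Sum>t\<in>R. E (\<lambda>G. ind (G (i,t)))))\<^sup>2) =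
        (\<Sum>t\<in>R. E (\<lambda>G. (ind (G (i,t)))\<^sup>2) - (E (\<lambda>G. ind (G (i,t))))\<^sup>2)"
  proof (rule var_bound)
    fix t t' assume "t \<in> R" "t' \<in> R" "t \<noteq> t'"
    thus "E (\<lambda>G. ind (G (i,t)) * ind (G (i,t'))) = E (\<lambda>G. ind (G (i,t))) * E (\<lambda>G. ind (G (i,t')))"
      using i by (intro indep[OF _ _ _ dep_ind dep_ind]) (auto simp: pair_LR)
  qed simp
  thus ?thesis using i by (simp add: dg_def E_ind_pair power2_eq_square algebra_simps)
qed

lemma E_medges: "E medges = card (pairs n) * q"
  by (simp add: medges_def[abs_def] E_sum E_ind)

lemma var_medges: "E (\<lambda>G. (medges G - card (pairs n) * q)\<^sup>2) = card (pairs n) * q * (1 - q)"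
proof -
  have "E (\<lambda>G. ((\<Sum>e\<in>pairs n. ind (G e)) - (\<Sum>e\<in>pairs n. E (\<lambda>G. ind (G e))))\<^sup>2) =
        (\<Sum>e\<in>pairs n. E (\<lambda>G. (ind (G e))\<^sup>2) - (E (\<lambda>G. ind (G e)))\<^sup>2)"
  proof (rule var_bound)
    fix e e' assume "e \<in> pairs n" "e' \<in> pairs n" "e \<noteq> e'"
    thus "E (\<lambda>G. ind (G e) * ind (G e')) = E (\<lambda>G. ind (G e)) * E (\<lambda>G. ind (G e'))"
      by (intro indep[OF _ _ _ dep_ind dep_ind]) auto
  qed (simp add: finite_pairs)
  thus ?thesis by (simp add: medges_def E_ind power2_eq_square algebra_simps)
qed

end

lemma frac_sqrt_mono:
  fixes x y a b :: real
  assumes "0 \<le> x" "x \<le> y" "0 < a" "0 \<le> b"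
  shows "x / sqrt (a + b * x) \<le> y / sqrt (a + b * y)"
proof -
  have pa: "0 < a + b * x" "0 < a + b * y" using assms by (auto intro: add_pos_nonneg)
  have "x\<^sup>2 * (a + b * y) \<le> y\<^sup>2 * (a + b * x)"
  proof -
    have "x\<^sup>2 * a \<le> y\<^sup>2 * a" using assms by (intro mult_right_mono power_mono) auto
    moreover have "x\<^sup>2 * (b * y) \<le> y\<^sup>2 * (b * x)"
    proof -
      have "x\<^sup>2 * (b * y) = x * (b * x * y)" by (simp add: power2_eq_square)
      also have "\<dots> \<le> y * (b * x * y)" using assms by (intro mult_right_mono) auto
      also have "\<dots> = y\<^sup>2 * (b * x)" by (simp add: power2_eq_square)
      finally show ?thesis .
    qed
    ultimately show ?thesis by (simp add: algebra_simps)
  qed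
  hence "x\<^sup>2 / (a + b * x) \<le> y\<^sup>2 / (a + b * y)" using pa by (simp add: divide_simps)
  hence "(x / sqrt (a + b * x))\<^sup>2 \<le> (y / sqrt (a + b * y))\<^sup>2" using pa by (simp add: power_divide)
  moreover have "0 \<le> y / sqrt (a + b * y)" using assms pa by simp
  ultimately show ?thesis by (rule power2_le_imp_le)
qed

context gs begin

definition "Dc = 2 * (real r * q)"
definition "Y G i = min (dg G i) Dc"

lemma rq_pos: "0 < real r * q" using r_pos q_pos by simp

lemma Y_nonneg: "0 \<le> Y G i" using dg_nonneg q_pos by (simp add: Y_def Dc_def)
lemma Y_le_dg: "Y G i \<le> dg G i" by (simp add: Y_def)
lemma Y_le_D: "Y G i \<le> Dc" by (simp add: Y_def)
lemma dg_minus_Y: "dg G i - Y G i \<le> (dg G i - r * q)\<^sup>2 / (r * q)"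
proof (cases "dg G i \<le> Dc")
  case True thus ?thesis using rq_pos by (simp add: Y_def)
next
  case False
  hence A: "r * q \<le> dg G i - r * q" unfolding Dc_def by linarith
  have B: "0 \<le> dg G i - r * q" using A rq_pos by linarith
  have "(dg G i - r * q) * (r * q) \<le> (dg G i - r * q) * (dg G i - r * q)"
    by (rule mult_left_mono[OF A B])
  hence "(dg G i - r * q) * (r * q) / (r * q) \<le> (dg G i - r * q)\<^sup>2 / (r * q)"
    using rq_pos by (intro divide_right_mono) (auto simp: power2_eq_square)
  hence "dg G i - r * q \<le> (dg G i - r * q)\<^sup>2 / (r * q)"
    using rq_pos q_pos r_pos by simp
  moreover have "Y G i = Dc" using False by (simp add: Y_def)
  ultimately show ?thesis using rq_pos unfolding Dc_def by linarith
qed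

lemma dep_Y: "dep (\<lambda>G. Y G i) (Ai i)"
  using dep_comp[OF dep_dg[of i], of "\<lambda>d. min d Dc"] by (simp add: Y_def)

lemma E_Y_ge: assumes i: "i \<in> L" shows "E (\<lambda>G. Y G i) \<ge> r * q - 1"
proof -
  have "E (\<lambda>G. dg G i - Y G i) \<le> E (\<lambda>G. (dg G i - r * q)\<^sup>2 / (r * q))"
    by (rule E_mono) (rule dg_minus_Y)
  also have "\<dots> = E (\<lambda>G. (dg G i - r * q)\<^sup>2) / (r * q)" by simp
  also have "\<dots> = (r * q * (1 - q)) / (r * q)" using var_dg[OF i] by simp
  also have "\<dots> = 1 - q" using q_pos r_pos by simp
  finally have "E (\<lambda>G. dg G i) - E (\<lambda>G. Y G i) \<le> 1 - q" by (simp add: E_diff)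
  thus ?thesis using E_dg[OF i] q_pos by simp
qed

lemma E_Ysq_le: assumes i: "i \<in> L" shows "E (\<lambda>G. (Y G i)\<^sup>2) \<le> 2 * (r * q)\<^sup>2"
proof -
  have "E (\<lambda>G. (Y G i)\<^sup>2) \<le> E (\<lambda>G. Dc * dg G i)"
  proof (rule E_mono)
    fix G
    have "(Y G i)\<^sup>2 = Y G i * Y G i" by (simp add: power2_eq_square)
    also have "\<dots> \<le> Dc * dg G i" using Y_nonneg[of G i] Y_le_D[of G i] Y_le_dg[of G i]
      by (intro mult_mono) auto
    finally show "(Y G i)\<^sup>2 \<le> Dc * dg G i" .
  qed
  also have "\<dots> = 2 * (r * q)\<^sup>2" using E_dg[OF i] by (simp add: Dc_def power2_eq_square)
  finally show ?thesis .
qed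

lemma sumY_event:
  assumes rq2: "2 \<le> real r * q"
  shows "Pr {G. (\<Sum>i\<in>L. Y G i) < real h * (real r * q) / 4} \<le> 32 / h"
proof -
  define rq where "rq = real r * q"
  have rqp: "0 < rq" using rq_pos by (simp add: rq_def)
  have var: "E (\<lambda>G. ((\<Sum>i\<in>L. Y G i) - (\<Sum>i\<in>L. E (\<lambda>G. Y G i)))\<^sup>2) =
        (\<Sum>i\<in>L. E (\<lambda>G. (Y G i)\<^sup>2) - (E (\<lambda>G. Y G i))\<^sup>2)"
  proof (rule var_bound)
    fix i j assume "i \<in> L" "j \<in> L" "i \<noteq> j"
    thus "E (\<lambda>G. Y G i * Y G j) = E (\<lambda>G. Y G i) * E (\<lambda>G. Y G j)"
      by (intro indep[OF Ai_sub Ai_sub Ai_disj dep_Y dep_Y])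
  qed simp
  also have "\<dots> \<le> (\<Sum>i\<in>L. 2 * rq\<^sup>2)"
  proof (intro sum_mono)
    fix i assume "i \<in> L"
    have "0 \<le> (E (\<lambda>G. Y G i))\<^sup>2" by simp
    thus "E (\<lambda>G. (Y G i)\<^sup>2) - (E (\<lambda>G. Y G i))\<^sup>2 \<le> 2 * rq\<^sup>2"
      using E_Ysq_le[OF \<open>i \<in> L\<close>] unfolding rq_def by linarith
  qed
  also have "\<dots> = h * (2 * rq\<^sup>2)" by simp
  finally have var': "E (\<lambda>G. ((\<Sum>i\<in>L. Y G i) - (\<Sum>i\<in>L. E (\<lambda>G. Y G i)))\<^sup>2) \<le> h * (2 * rq\<^sup>2)" .
  have EY: "(\<Sum>i\<in>L. E (\<lambda>G. Y G i)) \<ge> h * (rq - 1)"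
  proof -
    have "(\<Sum>i\<in>L. E (\<lambda>G. Y G i)) \<ge> (\<Sum>i\<in>L. rq - 1)" unfolding rq_def by (intro sum_mono E_Y_ge)
    thus ?thesis by simp
  qed
  have hpos: "0 < real h" using h_pos by simp
  define a where "a = real h * rq / 4"
  have apos: "0 < a" unfolding a_def using mult_pos_pos[OF hpos rqp] by simp
  have "rq / 2 \<le> rq - 1" using rq2 unfolding rq_def by linarith
  hence h2: "h * (rq - 1) \<ge> h * (rq / 2)"
    using hpos by (intro mult_left_mono) auto
  have h3: "h * (rq / 2) = 2 * a" by (simp add: a_def)
  have sub: "{G. (\<Sum>i\<in>L. Y G i) < real h * (real r * q) / 4} \<subseteq>
             {G. a \<le> \<bar>(\<Sum>i\<in>L. Y G i) - (\<Sum>i\<in>L. E (\<lambda>G. Y G i))\<bar>}"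
  proof
    fix G assume "G \<in> {G. (\<Sum>i\<in>L. Y G i) < real h * (real r * q) / 4}"
    hence "(\<Sum>i\<in>L. Y G i) < a" by (simp add: a_def rq_def)
    thus "G \<in> {G. a \<le> \<bar>(\<Sum>i\<in>L. Y G i) - (\<Sum>i\<in>L. E (\<lambda>G. Y G i))\<bar>}"
    proof -
      have "a \<le> (\<Sum>i\<in>L. E (\<lambda>G. Y G i)) - (\<Sum>i\<in>L. Y G i)"
        using EY h2 h3 \<open>(\<Sum>i\<in>L. Y G i) < a\<close> by linarith
      hence "a \<le> \<bar>(\<Sum>i\<in>L. Y G i) - (\<Sum>i\<in>L. E (\<lambda>G. Y G i))\<bar>" by linarith
      thus ?thesis by simp
    qed
  qed
  have "Pr {G. (\<Sum>i\<in>L. Y G i) < real h * (real r * q) / 4} \<le>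
        Pr {G. a \<le> \<bar>(\<Sum>i\<in>L. Y G i) - (\<Sum>i\<in>L. E (\<lambda>G. Y G i))\<bar>}"
    by (rule measure_pmf.finite_measure_mono[OF sub]) simp
  also have "\<dots> \<le> E (\<lambda>G. ((\<Sum>i\<in>L. Y G i) - (\<Sum>i\<in>L. E (\<lambda>G. Y G i)))\<^sup>2) / a\<^sup>2"
    by (rule Cheb[OF apos])
  also have "\<dots> \<le> h * (2 * rq\<^sup>2) / a\<^sup>2"
    using var' apos by (intro divide_right_mono) auto
  also have "\<dots> = 32 / h"
  proof -
    have A: "a\<^sup>2 = real h ^ 2 * rq\<^sup>2 / 16" by (simp add: a_def power_divide power_mult_distrib)
    have "0 < rq\<^sup>2" using rqp by simp
    hence "h * (2 * rq\<^sup>2) / (real h ^ 2 * rq\<^sup>2 / 16) = 32 / h" using hpos rqp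
      by (simp add: field_simps power2_eq_square)
    thus ?thesis unfolding A .
  qed
  finally show ?thesis .
qed

lemma gain_pointwise:
  assumes i: "i \<in> L"
  shows "eps / 2 * Y G i \<le> phi G i * dg G i"
proof -
  define d where "d = dg G i"
  define a where "a = 1 + eps\<^sup>2 * (r * q\<^sup>2)"
  have d0: "0 \<le> d" using dg_nonneg by (simp add: d_def)
  have a0: "0 < a" using eps_pos q_pos by (simp add: a_def add_pos_nonneg)
  have e2: "0 \<le> eps\<^sup>2" by simp
  have sv_le: "sv G i \<le> d + r * q\<^sup>2"
  proof -
    have "dg G i * (1 - 2*q) \<le> dg G i" using dg_nonneg[of G i] q_pos by (simp add: mult_left_le)
    thus ?thesis by (simp add: sv_dg d_def)
  qed
  have phid: "phi G i * d \<ge> eps * (d / sqrt (a + eps\<^sup>2 * d))"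
  proof -
    have "eps\<^sup>2 * sv G i \<le> eps\<^sup>2 * (d + r * q\<^sup>2)" by (rule mult_left_mono[OF sv_le e2])
    hence "1 + eps\<^sup>2 * sv G i \<le> a + eps\<^sup>2 * d" by (simp add: a_def algebra_simps)
    hence "sqrt (1 + eps\<^sup>2 * sv G i) \<le> sqrt (a + eps\<^sup>2 * d)" by (rule real_sqrt_le_mono)
    moreover have "0 < sqrt (1 + eps\<^sup>2 * sv G i)" using sv_nonneg[of G i] by (simp add: add_pos_nonneg)
    ultimately have "d / sqrt (a + eps\<^sup>2 * d) \<le> d / sqrt (1 + eps\<^sup>2 * sv G i)"
      using d0 by (intro divide_left_mono) auto
    hence "eps * (d / sqrt (a + eps\<^sup>2 * d)) \<le> eps * (d / sqrt (1 + eps\<^sup>2 * sv G i))"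
      using eps_pos by (intro mult_left_mono) auto
    also have "eps * (d / sqrt (1 + eps\<^sup>2 * sv G i)) = phi G i * d" by (simp add: phi_def)
    finally show ?thesis .
  qed
  have aD: "a + eps\<^sup>2 * Dc \<le> 4"
  proof -
    have "eps\<^sup>2 * (r * q\<^sup>2) + eps\<^sup>2 * Dc = (r * q * (2 + q)) / (real n * q)"
      unfolding eps_sq Dc_def using q_pos n2 by (simp add: field_simps power2_eq_square)
    also have "\<dots> \<le> 3"
    proof -
      have "r * q * (2 + q) \<le> real n * q * 3"
        using r_le q_pos q_half by (intro mult_mono) auto
      thus ?thesis using q_pos n2 by (simp add: divide_le_eq)
    qed
    finally show ?thesis by (simp add: a_def)
  qed
  have Y2: "Y G i / 2 \<le> d / sqrt (a + eps\<^sup>2 * d)"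
  proof (cases "d \<le> Dc")
    case True
    hence Yd: "Y G i = d" by (simp add: Y_def d_def)
    have "sqrt (a + eps\<^sup>2 * d) \<le> 2"
    proof -
      have "eps\<^sup>2 * d \<le> eps\<^sup>2 * Dc" using True e2 by (rule mult_left_mono)
      hence "a + eps\<^sup>2 * d \<le> 4" using aD by linarith
      hence "sqrt (a + eps\<^sup>2 * d) \<le> sqrt 4" by (rule real_sqrt_le_mono)
      thus ?thesis by simp
    qed
    moreover have "0 < sqrt (a + eps\<^sup>2 * d)" using a0 d0 by (simp add: add_pos_nonneg)
    ultimately have "d / 2 \<le> d / sqrt (a + eps\<^sup>2 * d)" using d0 by (intro divide_left_mono) auto
    thus ?thesis using Yd by simp
  next
    case False
    hence Yd: "Y G i = Dc" by (simp add: Y_def d_def)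
    have D0: "0 \<le> Dc" using rq_pos by (simp add: Dc_def)
    have "Dc / sqrt (a + eps\<^sup>2 * Dc) \<le> d / sqrt (a + eps\<^sup>2 * d)"
      using False D0 a0 by (intro frac_sqrt_mono) auto
    moreover have "Dc / 2 \<le> Dc / sqrt (a + eps\<^sup>2 * Dc)"
    proof -
      have "sqrt (a + eps\<^sup>2 * Dc) \<le> sqrt 4" using aD by (rule real_sqrt_le_mono)
      moreover have "0 < sqrt (a + eps\<^sup>2 * Dc)" using a0 D0 by (simp add: add_pos_nonneg)
      ultimately show ?thesis using D0 by (intro divide_left_mono) auto
    qed
    ultimately have "Dc / 2 \<le> d / sqrt (a + eps\<^sup>2 * d)" by linarith
    thus ?thesis unfolding Yd .
  qed
  have "eps / 2 * Y G i = eps * (Y G i / 2)" by simp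
  also have "\<dots> \<le> eps * (d / sqrt (a + eps\<^sup>2 * d))" using Y2 eps_pos by (intro mult_left_mono) auto
  also have "\<dots> \<le> phi G i * d" by (rule phid)
  finally show ?thesis by (simp add: d_def)
qed

end

lemma inv_sqrt_lip:
  fixes a b :: real assumes a0: "0 \<le> a" and ab: "a \<le> b"
  shows "0 \<le> 1 / sqrt (1 + a) - 1 / sqrt (1 + b)"
    and "1 / sqrt (1 + a) - 1 / sqrt (1 + b) \<le> (b - a) / 2"
proof -
  define A where "A = sqrt (1 + a)"
  define B where "B = sqrt (1 + b)"
  have A1: "1 \<le> A" using a0 by (simp add: A_def)
  have B1: "1 \<le> B" using a0 ab by (simp add: B_def)
  have AB: "A \<le> B" using ab by (simp add: A_def B_def)
  show "0 \<le> 1 / sqrt (1 + a) - 1 / sqrt (1 + b)"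
    using A1 AB unfolding A_def[symmetric] B_def[symmetric] by (simp add: frac_le)
  have "1 / A - 1 / B = (B - A) / (A * B)" using A1 B1 by (simp add: field_simps)
  also have "\<dots> \<le> (B - A) / 1"
  proof (rule divide_left_mono)
    show "0 \<le> B - A" using AB by simp
    show "1 \<le> A * B" using mult_mono[OF A1 B1] A1 by simp
    show "0 < A * B * 1" using A1 B1 by simp
  qed
  also have "B - A = (b - a) / (B + A)"
  proof -
    have "(B - A) * (B + A) = B\<^sup>2 - A\<^sup>2" by (simp add: algebra_simps power2_eq_square)
    also have "\<dots> = b - a" using a0 ab by (simp add: A_def B_def)
    finally show ?thesis using A1 B1 by (simp add: eq_divide_eq)
  qed
  also have "\<dots> \<le> (b - a) / 2"
    using A1 B1 ab by (intro divide_left_mono) auto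
  finally show "1 / sqrt (1 + a) - 1 / sqrt (1 + b) \<le> (b - a) / 2" by (simp add: A_def B_def)
qed

context gs begin

definition "Phi x = eps / sqrt (1 + eps\<^sup>2 * (x * (1 - 2*q) + r * q\<^sup>2))"

lemma phi_Phi: "phi G i = Phi (dg G i)" by (simp add: phi_def Phi_def sv_dg)

lemma Phi_lip: assumes "0 \<le> x" shows "\<bar>Phi (x + 1) - Phi x\<bar> \<le> eps ^ 3 / 2"
proof -
  define c where "c = 1 - 2*q"
  have c0: "0 \<le> c" "c \<le> 1" using q_pos q_half by (auto simp: c_def)
  define a where "a = eps\<^sup>2 * (x * c + r * q\<^sup>2)"
  define b where "b = eps\<^sup>2 * ((x + 1) * c + r * q\<^sup>2)"
  have a0: "0 \<le> a" using assms c0 by (simp add: a_def)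
  have ba: "b - a = eps\<^sup>2 * c" by (simp add: a_def b_def algebra_simps)
  have "0 \<le> eps\<^sup>2 * c" using c0 by simp
  hence ab: "a \<le> b" using ba by linarith
  have PP: "Phi x - Phi (x + 1) = eps * (1 / sqrt (1 + a) - 1 / sqrt (1 + b))"
    by (simp add: Phi_def a_def b_def c_def algebra_simps)
  have l1: "0 \<le> 1 / sqrt (1 + a) - 1 / sqrt (1 + b)" by (rule inv_sqrt_lip(1)[OF a0 ab])
  have l2: "1 / sqrt (1 + a) - 1 / sqrt (1 + b) \<le> eps\<^sup>2 / 2"
  proof -
    have "1 / sqrt (1 + a) - 1 / sqrt (1 + b) \<le> (b - a) / 2" by (rule inv_sqrt_lip(2)[OF a0 ab])
    also have "\<dots> \<le> eps\<^sup>2 / 2" using ba c0 by (simp add: mult_left_le)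
    finally show ?thesis .
  qed
  have nn: "0 \<le> Phi x - Phi (x + 1)" using PP l1 eps_pos by simp
  have "\<bar>Phi (x + 1) - Phi x\<bar> = \<bar>Phi x - Phi (x + 1)\<bar>" by (rule abs_minus_commute)
  also have "\<dots> = Phi x - Phi (x + 1)" using nn by simp
  also have "\<dots> = eps * (1 / sqrt (1 + a) - 1 / sqrt (1 + b))" by (rule PP)
  also have "\<dots> \<le> eps * (eps\<^sup>2 / 2)" using l2 eps_pos by (intro mult_left_mono) auto
  finally show ?thesis by (simp add: power3_eq_cube power2_eq_square)
qed

lemma E_phiB: assumes i: "i \<in> L" and t: "t \<in> R"
  shows "\<bar>E (\<lambda>G. phi G i * Bv G i t)\<bar> \<le> q * eps ^ 3 / 2"
proof -
  define dm where "dm G = (\<Sum>t'\<in>R - {t}. ind (G (i,t')))" for G :: "nat \<times> nat \<Rightarrow> bool"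
  have dgsplit: "dg G i = ind (G (i,t)) + dm G" for G
    unfolding dg_def dm_def using t by (simp add: sum.remove)
  have dm0: "0 \<le> dm G" for G by (simp add: dm_def sum_nonneg)
  have pw: "phi G i * Bv G i t = ind (G (i,t)) * ((1 - q) * Phi (dm G + 1)) + (1 - ind (G (i,t))) * (- q * Phi (dm G))" for G
    by (cases "G (i,t)") (simp_all add: phi_Phi dgsplit Bv_def add.commute)
  define A where "A = Pair i ` (R - {t})"
  have A_sub: "A \<subseteq> pairs n" using i by (auto simp: A_def pair_LR)
  have itA: "{(i,t)} \<inter> A = {}" by (auto simp: A_def)
  have it: "{(i,t)} \<subseteq> pairs n" using pair_LR[OF i t] by simp
  have dep_dm: "dep dm A" by (auto simp: dep_def dm_def A_def intro!: sum.cong)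
  have dep1: "dep (\<lambda>G. (1 - q) * Phi (dm G + 1)) A" by (rule dep_comp[OF dep_dm])
  have dep2: "dep (\<lambda>G. - q * Phi (dm G)) A" by (rule dep_comp[OF dep_dm])
  have dep3: "dep (\<lambda>G. 1 - ind (G (i,t))) {(i,t)}" by (rule dep_comp[OF dep_ind])
  have Ei: "E (\<lambda>G. ind (G (i,t))) = q" by (rule E_ind_pair[OF i t])
  have "E (\<lambda>G. phi G i * Bv G i t) =
        E (\<lambda>G. ind (G (i,t)) * ((1 - q) * Phi (dm G + 1))) + E (\<lambda>G. (1 - ind (G (i,t))) * (- q * Phi (dm G)))"
    by (simp only: pw E_add)
  also have "E (\<lambda>G. ind (G (i,t)) * ((1 - q) * Phi (dm G + 1))) = q * E (\<lambda>G. (1 - q) * Phi (dm G + 1))"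
    using indep[OF it A_sub itA dep_ind dep1] Ei by simp
  also have "E (\<lambda>G. (1 - ind (G (i,t))) * (- q * Phi (dm G))) = (1 - q) * E (\<lambda>G. - q * Phi (dm G))"
    using indep[OF it A_sub itA dep3 dep2] Ei by (simp add: E_diff)
  also have "q * E (\<lambda>G. (1 - q) * Phi (dm G + 1)) + (1 - q) * E (\<lambda>G. - q * Phi (dm G)) =
             q * (1 - q) * E (\<lambda>G. Phi (dm G + 1) - Phi (dm G))"
    by (simp add: E_diff algebra_simps)
  finally have eq: "E (\<lambda>G. phi G i * Bv G i t) = q * (1 - q) * E (\<lambda>G. Phi (dm G + 1) - Phi (dm G))" .
  have "\<bar>E (\<lambda>G. Phi (dm G + 1) - Phi (dm G))\<bar> \<le> E (\<lambda>G. \<bar>Phi (dm G + 1) - Phi (dm G)\<bar>)" by (rule E_abs)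
  also have "\<dots> \<le> E (\<lambda>G. eps ^ 3 / 2)" by (rule E_mono) (rule Phi_lip[OF dm0])
  also have "\<dots> = eps ^ 3 / 2" by simp
  finally have b: "\<bar>E (\<lambda>G. Phi (dm G + 1) - Phi (dm G))\<bar> \<le> eps ^ 3 / 2" .
  have "\<bar>E (\<lambda>G. phi G i * Bv G i t)\<bar> = q * (1 - q) * \<bar>E (\<lambda>G. Phi (dm G + 1) - Phi (dm G))\<bar>"
    using q_pos q_half by (simp add: eq abs_mult)
  also have "\<dots> \<le> q * 1 * (eps ^ 3 / 2)"
    using q_pos q_half b by (intro mult_mono) auto
  finally show ?thesis by simp
qed

end

lemma pair_sum_identity:
  fixes u :: "nat \<Rightarrow> real" and L :: "nat set"
  assumes fin: "finite L"
  shows "2 * (\<Sum>i\<in>L. \<Sum>j\<in>{j\<in>L. i < j}. u i * u j) = (\<Sum>i\<in>L. u i)\<^sup>2 - (\<Sum>i\<in>L. (u i)\<^sup>2)"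
proof -
  have split: "(\<Sum>j\<in>L. u i * u j) = (\<Sum>j\<in>{j\<in>L. i < j}. u i * u j) + (\<Sum>j\<in>{j\<in>L. j < i}. u i * u j) + (u i)\<^sup>2"
    if i: "i \<in> L" for i
  proof -
    have "(\<Sum>j\<in>L. u i * u j) = u i * u i + (\<Sum>j\<in>L - {i}. u i * u j)"
      using fin i by (simp add: sum.remove)
    also have "L - {i} = {j\<in>L. i < j} \<union> {j\<in>L. j < i}" by auto
    also have "(\<Sum>j\<in>\<dots>. u i * u j) = (\<Sum>j\<in>{j\<in>L. i < j}. u i * u j) + (\<Sum>j\<in>{j\<in>L. j < i}. u i * u j)"
      using fin by (intro sum.union_disjoint) auto
    finally show ?thesis by (simp add: power2_eq_square)
  qed
  have swap: "(\<Sum>i\<in>L. \<Sum>j\<in>{j\<in>L. j < i}. u i * u j) = (\<Sum>i\<in>L. \<Sum>j\<in>{j\<in>L. i < j}. u i * u j)"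
  proof -
    have "(\<Sum>i\<in>L. \<Sum>j\<in>{j. j\<in>L \<and> j < i}. u i * u j) = (\<Sum>j\<in>L. \<Sum>i\<in>{i. i\<in>L \<and> j < i}. u i * u j)"
      using sum.swap_restrict[OF fin fin, of "\<lambda>i j. u i * u j" "\<lambda>i j. j < i"] by simp
    thus ?thesis by (simp add: mult.commute)
  qed
  have "(\<Sum>i\<in>L. u i)\<^sup>2 = (\<Sum>i\<in>L. \<Sum>j\<in>L. u i * u j)" by (simp add: power2_eq_square sum_product)
  also have "\<dots> = (\<Sum>i\<in>L. (\<Sum>j\<in>{j\<in>L. i < j}. u i * u j) + (\<Sum>j\<in>{j\<in>L. j < i}. u i * u j) + (u i)\<^sup>2)"
    by (intro sum.cong refl split)
  also have "\<dots> = (\<Sum>i\<in>L. \<Sum>j\<in>{j\<in>L. i < j}. u i * u j) + (\<Sum>i\<in>L. \<Sum>j\<in>{j\<in>L. j < i}. u i * u j) + (\<Sum>i\<in>L. (u i)\<^sup>2)"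
    by (simp add: sum.distrib)
  finally show ?thesis using swap by simp
qed

context gs begin

lemma LL_Sigma: "LL = Sigma L (\<lambda>i. {j\<in>L. i < j})" by (auto simp: LL_def)
lemma sum_LL: "(\<Sum>e\<in>LL. f e) = (\<Sum>i\<in>L. \<Sum>j\<in>{j\<in>L. i < j}. f (i,j))"
  unfolding LL_Sigma by (subst sum.Sigma) auto

definition "U G t = (\<Sum>i\<in>L. phi G i * Bv G i t)"
definition "Zsum G = (\<Sum>e\<in>LL. Z G (fst e) (snd e))"
definition "W G = (\<Sum>e\<in>LL. (ind (G e) - q) * Z G (fst e) (snd e))"
definition "Pen G = (\<Sum>e\<in>LL. ind (G e) * Z G (fst e) (snd e))"

lemma Zsum_le: "2 * Zsum G \<le> (\<Sum>t\<in>R. (U G t)\<^sup>2)"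
proof -
  define u where "u i t = phi G i * Bv G i t" for i t
  have "Zsum G = (\<Sum>i\<in>L. \<Sum>j\<in>{j\<in>L. i < j}. Z G i j)" unfolding Zsum_def sum_LL by simp
  also have "\<dots> = (\<Sum>i\<in>L. \<Sum>j\<in>{j\<in>L. i < j}. \<Sum>t\<in>R. u i t * u j t)"
  proof (intro sum.cong refl)
    fix i j
    have "Z G i j = phi G i * phi G j * (\<Sum>t\<in>R. Bv G i t * Bv G j t)" by (simp add: Z_def Xc_def)
    also have "\<dots> = (\<Sum>t\<in>R. phi G i * phi G j * (Bv G i t * Bv G j t))" by (rule sum_distrib_left)
    also have "\<dots> = (\<Sum>t\<in>R. u i t * u j t)" by (intro sum.cong refl) (simp add: u_def mult_ac)
    finally show "Z G i j = (\<Sum>t\<in>R. u i t * u j t)" .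
  qed
  also have "\<dots> = (\<Sum>i\<in>L. \<Sum>t\<in>R. \<Sum>j\<in>{j\<in>L. i < j}. u i t * u j t)"
    by (intro sum.cong refl sum.swap)
  also have "\<dots> = (\<Sum>t\<in>R. \<Sum>i\<in>L. \<Sum>j\<in>{j\<in>L. i < j}. u i t * u j t)"
    by (rule sum.swap)
  finally have "2 * Zsum G = (\<Sum>t\<in>R. 2 * (\<Sum>i\<in>L. \<Sum>j\<in>{j\<in>L. i < j}. u i t * u j t))"
    by (simp add: sum_distrib_left)
  also have "\<dots> = (\<Sum>t\<in>R. (\<Sum>i\<in>L. u i t)\<^sup>2 - (\<Sum>i\<in>L. (u i t)\<^sup>2))"
    by (intro sum.cong refl pair_sum_identity) simp
  also have "\<dots> \<le> (\<Sum>t\<in>R. (\<Sum>i\<in>L. u i t)\<^sup>2)"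
    by (intro sum_mono) (simp add: sum_nonneg)
  also have "\<dots> = (\<Sum>t\<in>R. (U G t)\<^sup>2)" by (simp add: U_def u_def)
  finally show ?thesis .
qed

lemma Pen_eq: "Pen G = W G + q * Zsum G"
proof -
  have "Pen G = (\<Sum>e\<in>LL. (ind (G e) - q) * Z G (fst e) (snd e) + q * Z G (fst e) (snd e))"
    unfolding Pen_def by (intro sum.cong refl) (simp add: algebra_simps)
  also have "\<dots> = W G + q * Zsum G" by (simp add: sum.distrib W_def Zsum_def sum_distrib_left)
  finally show ?thesis .
qed

lemma Pen_le: "Pen G \<le> \<bar>W G\<bar> + q / 2 * (\<Sum>t\<in>R. (U G t)\<^sup>2)"
proof -
  have "q * (2 * Zsum G) \<le> q * (\<Sum>t\<in>R. (U G t)\<^sup>2)" using Zsum_le[of G] q_pos by (intro mult_left_mono) auto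
  hence "q * Zsum G \<le> q / 2 * (\<Sum>t\<in>R. (U G t)\<^sup>2)" by simp
  moreover have "W G \<le> \<bar>W G\<bar>" by simp
  ultimately show ?thesis unfolding Pen_eq by linarith
qed

lemma dep_Bv_sub: "(i,t) \<in> A \<Longrightarrow> dep (\<lambda>G. Bv G i t) A" by (auto simp: dep_def Bv_def)

lemma E_Xc_sq: assumes i: "i \<in> L" and j: "j \<in> L" and ij: "i \<noteq> j"
  shows "E (\<lambda>G. (Xc G i j)\<^sup>2) \<le> r * q\<^sup>2"
proof -
  have EX: "E (\<lambda>G. Bv G i t * Bv G j t) = 0" if t: "t \<in> R" for t
    using indep[of "{(i,t)}" "{(j,t)}", OF _ _ _ dep_Bv dep_Bv] pair_LR[OF i t] pair_LR[OF j t] ij E_Bv[OF i t] by auto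
  have "E (\<lambda>G. (\<Sum>t\<in>R. Bv G i t * Bv G j t)\<^sup>2) =
        (\<Sum>t\<in>R. E (\<lambda>G. (Bv G i t * Bv G j t)\<^sup>2) - (E (\<lambda>G. Bv G i t * Bv G j t))\<^sup>2) + (\<Sum>t\<in>R. E (\<lambda>G. Bv G i t * Bv G j t))\<^sup>2"
  proof (rule second_moment)
    fix t t' assume t: "t \<in> R" and t': "t' \<in> R" and tt: "t \<noteq> t'"
    have "E (\<lambda>G. Bv G i t * Bv G j t * (Bv G i t' * Bv G j t')) = E (\<lambda>G. Bv G i t * (Bv G j t * Bv G i t' * Bv G j t'))"
      by (simp add: mult.assoc)
    also have "\<dots> = E (\<lambda>G. Bv G i t) * E (\<lambda>G. Bv G j t * Bv G i t' * Bv G j t')"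
    proof (rule indep[of "{(i,t)}" "{(j,t),(i,t'),(j,t')}"])
      show "{(i,t)} \<subseteq> pairs n" using pair_LR[OF i t] by simp
      show "{(j,t),(i,t'),(j,t')} \<subseteq> pairs n" using pair_LR i j t t' by simp
      show "{(i,t)} \<inter> {(j,t),(i,t'),(j,t')} = {}" using ij tt by auto
      show "dep (\<lambda>G. Bv G i t) {(i,t)}" by (rule dep_Bv)
      show "dep (\<lambda>G. Bv G j t * Bv G i t' * Bv G j t') {(j,t),(i,t'),(j,t')}"
        by (intro dep_mult dep_Bv_sub) auto
    qed
    also have "\<dots> = 0" using E_Bv[OF i t] by simp
    finally show "E (\<lambda>G. Bv G i t * Bv G j t * (Bv G i t' * Bv G j t')) =
          E (\<lambda>G. Bv G i t * Bv G j t) * E (\<lambda>G. Bv G i t' * Bv G j t')" using EX[OF t] by simp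
  qed simp
  also have "\<dots> = (\<Sum>t\<in>R. E (\<lambda>G. (Bv G i t * Bv G j t)\<^sup>2))" using EX by simp
  also have "\<dots> \<le> (\<Sum>t\<in>R. q\<^sup>2)"
  proof (rule sum_mono)
    fix t assume t: "t \<in> R"
    have "E (\<lambda>G. (Bv G i t * Bv G j t)\<^sup>2) = E (\<lambda>G. (Bv G i t)\<^sup>2 * (Bv G j t)\<^sup>2)"
      by (simp add: power_mult_distrib)
    also have "\<dots> = E (\<lambda>G. (Bv G i t)\<^sup>2) * E (\<lambda>G. (Bv G j t)\<^sup>2)"
      using pair_LR[OF i t] pair_LR[OF j t] ij
      by (intro indep[of "{(i,t)}" "{(j,t)}"] dep_comp[OF dep_Bv]) auto
    also have "\<dots> = (q * (1 - q))\<^sup>2" using E_Bv_sq[OF i t] E_Bv_sq[OF j t] by (simp add: power2_eq_square)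
    also have "\<dots> \<le> q\<^sup>2" using q_pos q_half by (intro power_mono) (auto simp: mult_le_cancel_left1)
    finally show "E (\<lambda>G. (Bv G i t * Bv G j t)\<^sup>2) \<le> q\<^sup>2" .
  qed
  also have "\<dots> = r * q\<^sup>2" by simp
  finally show ?thesis by (simp add: Xc_def)
qed

lemma dep_Xc: "i \<in> L \<Longrightarrow> j \<in> L \<Longrightarrow> dep (\<lambda>G. Xc G i j) LR"
  by (auto simp: dep_def Xc_def Bv_def LR_def intro!: sum.cong)
lemma dep_phi_LR: "i \<in> L \<Longrightarrow> dep (\<lambda>G. phi G i) LR"
  by (rule dep_mono[OF dep_phi Ai_LR])
lemma dep_Z: "i \<in> L \<Longrightarrow> j \<in> L \<Longrightarrow> dep (\<lambda>G. Z G i j) LR"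
  unfolding Z_def by (intro dep_mult dep_phi_LR dep_Xc)

lemma E_Z_sq: assumes i: "i \<in> L" and j: "j \<in> L" and ij: "i \<noteq> j"
  shows "E (\<lambda>G. (Z G i j)\<^sup>2) \<le> eps ^ 4 * (r * q\<^sup>2)"
proof -
  have "E (\<lambda>G. (Z G i j)\<^sup>2) \<le> E (\<lambda>G. eps ^ 4 * (Xc G i j)\<^sup>2)"
  proof (rule E_mono)
    fix G
    have "phi G i * phi G j \<le> eps * eps"
      by (intro mult_mono phi_le phi_nonneg) (use eps_pos in auto)
    hence "(phi G i * phi G j)\<^sup>2 \<le> (eps * eps)\<^sup>2"
      by (rule power_mono) (rule mult_nonneg_nonneg[OF phi_nonneg phi_nonneg])
    hence "(phi G i * phi G j)\<^sup>2 * (Xc G i j)\<^sup>2 \<le> (eps * eps)\<^sup>2 * (Xc G i j)\<^sup>2"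
      by (intro mult_right_mono) auto
    thus "(Z G i j)\<^sup>2 \<le> eps ^ 4 * (Xc G i j)\<^sup>2"
      by (simp add: Z_def power_mult_distrib power2_eq_square power4_eq_xxxx mult_ac)
  qed
  also have "\<dots> = eps ^ 4 * E (\<lambda>G. (Xc G i j)\<^sup>2)" by simp
  also have "\<dots> \<le> eps ^ 4 * (r * q\<^sup>2)" using E_Xc_sq[OF i j ij] by (intro mult_left_mono) auto
  finally show ?thesis .
qed

lemma LL_props: "e \<in> LL \<Longrightarrow> fst e \<in> L \<and> snd e \<in> L \<and> fst e \<noteq> snd e"
  by (auto simp: LL_def)

lemma E_indq_sq: "e \<in> pairs n \<Longrightarrow> E (\<lambda>G. (ind (G e) - q)\<^sup>2) = q * (1 - q)"
proof -
  assume e: "e \<in> pairs n"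
  have "(\<lambda>G. (ind (G e) - q)\<^sup>2) = (\<lambda>G. ind (G e) * (1 - 2*q) + q\<^sup>2)"
  proof
    fix G show "(ind (G e) - q)\<^sup>2 = ind (G e) * (1 - 2*q) + q\<^sup>2"
      by (cases "G e") (simp_all add: power2_eq_square algebra_simps)
  qed
  hence "E (\<lambda>G. (ind (G e) - q)\<^sup>2) = E (\<lambda>G. ind (G e) * (1 - 2*q) + q\<^sup>2)" by simp
  also have "\<dots> = E (\<lambda>G. ind (G e)) * (1 - 2*q) + q\<^sup>2" by (simp only: E_add E_multc E_const)
  also have "\<dots> = q * (1 - 2*q) + q\<^sup>2" using E_ind[OF e] by simp
  finally show ?thesis by (simp add: power2_eq_square algebra_simps)
qed

lemma depi: "dep (\<lambda>G. ind (G e) - q) {e}" by (rule dep_comp[OF dep_ind])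
lemma eLR: "e \<in> LL \<Longrightarrow> {e} \<inter> LR = {}" using LL_LR by auto
lemma eS: "e \<in> LL \<Longrightarrow> {e} \<subseteq> pairs n" using LL_sub by auto
lemma Ei: "e \<in> LL \<Longrightarrow> E (\<lambda>G. ind (G e) - q) = 0" using LL_sub by (auto simp: E_diff E_ind)

definition "XW e G = (ind (G e) - q) * Z G (fst e) (snd e)"

lemma EXW: assumes e: "e \<in> LL" shows "E (XW e) = 0"
proof -
  have "E (XW e) = E (\<lambda>G. ind (G e) - q) * E (\<lambda>G. Z G (fst e) (snd e))"
    unfolding XW_def[abs_def] using LL_props[OF e] by (intro indep[OF eS[OF e] LR_sub eLR[OF e] depi dep_Z]) auto
  thus ?thesis using Ei[OF e] by simp
qed

lemma EXW_cross: assumes e: "e \<in> LL" and e': "e' \<in> LL" and ee: "e \<noteq> e'"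
  shows "E (\<lambda>G. XW e G * XW e' G) = E (XW e) * E (XW e')"
proof -
  have "E (\<lambda>G. XW e G * XW e' G) = E (\<lambda>G. (ind (G e) - q) * ((ind (G e') - q) * Z G (fst e) (snd e) * Z G (fst e') (snd e')))"
    by (simp add: XW_def mult_ac)
  also have "\<dots> = E (\<lambda>G. ind (G e) - q) * E (\<lambda>G. (ind (G e') - q) * Z G (fst e) (snd e) * Z G (fst e') (snd e'))"
  proof (rule indep[OF eS[OF e] _ _ depi])
    show "insert e' LR \<subseteq> pairs n" using eS[OF e'] LR_sub by auto
    show "{e} \<inter> insert e' LR = {}" using ee eLR[OF e] by auto
    have a: "dep (\<lambda>G. ind (G e') - q) (insert e' LR)" by (rule dep_mono[OF depi]) auto
    have b: "dep (\<lambda>G. Z G (fst e) (snd e)) (insert e' LR)"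
      by (rule dep_mono[OF dep_Z]) (use LL_props[OF e] in auto)
    have c: "dep (\<lambda>G. Z G (fst e') (snd e')) (insert e' LR)"
      by (rule dep_mono[OF dep_Z]) (use LL_props[OF e'] in auto)
    show "dep (\<lambda>G. (ind (G e') - q) * Z G (fst e) (snd e) * Z G (fst e') (snd e')) (insert e' LR)"
      by (rule dep_mult[OF dep_mult[OF a b] c])
  qed
  also have "\<dots> = 0" using Ei[OF e] by simp
  finally show ?thesis using EXW[OF e] by simp
qed

lemma EXW_sq: assumes e: "e \<in> LL" shows "E (\<lambda>G. (XW e G)\<^sup>2) \<le> q * (eps ^ 4 * (r * q\<^sup>2))"
proof -
  have ep: "e \<in> pairs n" using e LL_sub by auto
  have "E (\<lambda>G. (XW e G)\<^sup>2) = E (\<lambda>G. (ind (G e) - q)\<^sup>2 * (Z G (fst e) (snd e))\<^sup>2)"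
    by (simp add: XW_def power_mult_distrib)
  also have "\<dots> = E (\<lambda>G. (ind (G e) - q)\<^sup>2) * E (\<lambda>G. (Z G (fst e) (snd e))\<^sup>2)"
  proof (rule indep[OF eS[OF e] LR_sub eLR[OF e]])
    show "dep (\<lambda>G. (ind (G e) - q)\<^sup>2) {e}" by (rule dep_comp[OF dep_ind])
    show "dep (\<lambda>G. (Z G (fst e) (snd e))\<^sup>2) LR" using LL_props[OF e] by (intro dep_comp[OF dep_Z]) auto
  qed
  also have "\<dots> = q * (1 - q) * E (\<lambda>G. (Z G (fst e) (snd e))\<^sup>2)" by (simp only: E_indq_sq[OF ep])
  also have "\<dots> \<le> q * (eps ^ 4 * (r * q\<^sup>2))"
  proof (rule mult_mono)
    show "q * (1 - q) \<le> q" using q_pos q_half by (simp add: mult_le_cancel_left1)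
    show "E (\<lambda>G. (Z G (fst e) (snd e))\<^sup>2) \<le> eps ^ 4 * (r * q\<^sup>2)"
      using LL_props[OF e] by (intro E_Z_sq) auto
    show "0 \<le> q" using q_pos by simp
    show "0 \<le> E (\<lambda>G. (Z G (fst e) (snd e))\<^sup>2)" by (rule E_nonneg) simp
  qed
  finally show ?thesis .
qed

lemma E_W_sq: "E (\<lambda>G. (W G)\<^sup>2) \<le> card LL * (q * (eps ^ 4 * (r * q\<^sup>2)))"
proof -
  have v: "E (\<lambda>G. ((\<Sum>e\<in>LL. XW e G) - (\<Sum>e\<in>LL. E (XW e)))\<^sup>2) = (\<Sum>e\<in>LL. E (\<lambda>G. (XW e G)\<^sup>2) - (E (XW e))\<^sup>2)"
    by (rule var_bound) (simp_all add: EXW_cross)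
  have s0: "(\<Sum>e\<in>LL. E (XW e)) = 0" using EXW by simp
  have s1: "(\<Sum>e\<in>LL. E (\<lambda>G. (XW e G)\<^sup>2) - (E (XW e))\<^sup>2) = (\<Sum>e\<in>LL. E (\<lambda>G. (XW e G)\<^sup>2))"
    using EXW by (intro sum.cong) auto
  have w: "W = (\<lambda>G. \<Sum>e\<in>LL. XW e G)" by (simp add: W_def[abs_def] XW_def)
  have "E (\<lambda>G. (W G)\<^sup>2) = (\<Sum>e\<in>LL. E (\<lambda>G. (XW e G)\<^sup>2))"
    using v unfolding s0 s1 w by simp
  also have "\<dots> \<le> (\<Sum>e\<in>LL. q * (eps ^ 4 * (r * q\<^sup>2)))" by (intro sum_mono EXW_sq)
  also have "\<dots> = card LL * (q * (eps ^ 4 * (r * q\<^sup>2)))" by simp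
  finally show ?thesis .
qed

lemma E_U_sq: assumes t: "t \<in> R"
  shows "E (\<lambda>G. (U G t)\<^sup>2) \<le> h * (eps\<^sup>2 * q) + (h * (q * eps ^ 3 / 2))\<^sup>2"
proof -
  define X where "X i G = phi G i * Bv G i t" for i :: nat and G :: "nat \<times> nat \<Rightarrow> bool"
  have dX: "dep (X i) (Ai i)" for i
    unfolding X_def using t by (intro dep_mult dep_phi dep_Bv_sub) (auto simp: Ai_def)
  have "E (\<lambda>G. (\<Sum>i\<in>L. X i G)\<^sup>2) = (\<Sum>i\<in>L. E (\<lambda>G. (X i G)\<^sup>2) - (E (X i))\<^sup>2) + (\<Sum>i\<in>L. E (X i))\<^sup>2"
  proof (rule second_moment)
    fix i j assume "i \<in> L" "j \<in> L" "i \<noteq> j"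
    thus "E (\<lambda>G. X i G * X j G) = E (X i) * E (X j)"
      by (intro indep[OF Ai_sub Ai_sub Ai_disj dX dX])
  qed simp
  also have "\<dots> \<le> (\<Sum>i\<in>L. eps\<^sup>2 * q) + (\<Sum>i\<in>L. q * eps ^ 3 / 2)\<^sup>2"
  proof (rule add_mono)
    show "(\<Sum>i\<in>L. E (\<lambda>G. (X i G)\<^sup>2) - (E (X i))\<^sup>2) \<le> (\<Sum>i\<in>L. eps\<^sup>2 * q)"
    proof (rule sum_mono)
      fix i assume i: "i \<in> L"
      have "E (\<lambda>G. (X i G)\<^sup>2) \<le> E (\<lambda>G. eps\<^sup>2 * (Bv G i t)\<^sup>2)"
      proof (rule E_mono)
        fix G
        have "(phi G i)\<^sup>2 \<le> eps\<^sup>2" by (rule power_mono[OF phi_le phi_nonneg])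
        thus "(X i G)\<^sup>2 \<le> eps\<^sup>2 * (Bv G i t)\<^sup>2"
          by (simp add: X_def power_mult_distrib mult_right_mono)
      qed
      also have "\<dots> = eps\<^sup>2 * (q * (1 - q))" using E_Bv_sq[OF i t] by simp
      also have "\<dots> \<le> eps\<^sup>2 * q" using q_pos by (intro mult_left_mono) (auto simp: mult_le_cancel_left1)
      moreover have "0 \<le> (E (X i))\<^sup>2" by simp
      ultimately show "E (\<lambda>G. (X i G)\<^sup>2) - (E (X i))\<^sup>2 \<le> eps\<^sup>2 * q" by linarith
    qed
    have "\<bar>\<Sum>i\<in>L. E (X i)\<bar> \<le> (\<Sum>i\<in>L. \<bar>E (X i)\<bar>)" by (rule sum_abs)
    also have "\<dots> \<le> (\<Sum>i\<in>L. q * eps ^ 3 / 2)"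
      by (intro sum_mono) (unfold X_def, rule E_phiB[OF _ t])
    finally have "\<bar>\<Sum>i\<in>L. E (X i)\<bar> \<le> (\<Sum>i\<in>L. q * eps ^ 3 / 2)" .
    hence "\<bar>\<Sum>i\<in>L. E (X i)\<bar>\<^sup>2 \<le> (\<Sum>i\<in>L. q * eps ^ 3 / 2)\<^sup>2"
      by (rule power_mono) simp
    thus "(\<Sum>i\<in>L. E (X i))\<^sup>2 \<le> (\<Sum>i\<in>L. q * eps ^ 3 / 2)\<^sup>2" by simp
  qed
  also have "\<dots> = h * (eps\<^sup>2 * q) + (h * (q * eps ^ 3 / 2))\<^sup>2" by simp
  finally show ?thesis by (simp add: U_def X_def)
qed

end

lemma inner_n_sym: "inner_n n x y = inner_n n y x" by (simp add: inner_n_def mult.commute)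

lemma inner_ge_m1: assumes "inner_n n x x = 1" "inner_n n y y = 1" shows "-1 \<le> inner_n n x y"
proof -
  have "0 \<le> (\<Sum>t\<in>{1..n}. (x t + y t)\<^sup>2)" by (simp add: sum_nonneg)
  also have "\<dots> = inner_n n x x + 2 * inner_n n x y + inner_n n y y"
    by (simp add: inner_n_def power2_eq_square algebra_simps sum.distrib sum_distrib_left)
  finally show ?thesis using assms by simp
qed

lemma SDP_ge:
  assumes k: "2 \<le> k" and feas: "fj_feasible n k v"
  shows "fj_objective n k G v \<le> SDP n k G"
proof -
  define c where "c = (real k - 1) / real k"
  have c0: "0 \<le> c" using k by (simp add: c_def)
  have bnd: "fj_objective n k G w \<le> (\<Sum>e\<in>pairs n. 2 * c)" if w: "fj_feasible n k w" for w
    unfolding fj_objective_def c_def[symmetric]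
  proof (rule sum_mono, clarify)
    fix i j assume ij: "(i, j) \<in> pairs n"
    hence ij': "i \<in> {1..n}" "j \<in> {1..n}" by (auto simp: pairs_def)
    have "-1 \<le> inner_n n (w i) (w j)"
      using w ij' by (intro inner_ge_m1) (auto simp: fj_feasible_def)
    hence a: "1 - inner_n n (w i) (w j) \<le> 2" by simp
    show "(if G (i, j) then 1 else 0) * c * (1 - inner_n n (w i) (w j)) \<le> 2 * c"
    proof (cases "G (i,j)")
      case True thus ?thesis using a c0 by (simp add: mult.commute mult_left_mono)
    next
      case False thus ?thesis using c0 by simp
    qed
  qed
  have "bdd_above (fj_objective n k G ` {v. fj_feasible n k v})"
    using bnd by (intro bdd_aboveI[of _ "\<Sum>e\<in>pairs n. 2 * c"]) auto
  moreover have "fj_objective n k G v \<in> fj_objective n k G ` {v. fj_feasible n k v}" using feas by simp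
  ultimately show ?thesis unfolding SDP_def by (rule cSup_upper[rotated])
qed

context gs begin

definition "RR = {(i,j). i \<in> R \<and> j \<in> R \<and> i < j}"

definition "vv G i t = (if i \<in> L then (if t = i then alpha G i else if t \<in> R then - (phi G i * Bv G i t) else 0)
                         else (if t = i then 1 else 0))"

lemma LR_disj': "L \<inter> R = {}" using LR_disj by auto
lemma LuR: "{1..n} = L \<union> R" using h_le by (auto simp: L_def R_def)

lemma inner_split: "inner_n n x y = (\<Sum>t\<in>L. x t * y t) + (\<Sum>t\<in>R. x t * y t)"
  unfolding inner_n_def LuR by (rule sum.union_disjoint) (auto simp: LR_disj')

lemma vv_L_L: "i \<in> L \<Longrightarrow> t \<in> L \<Longrightarrow> vv G i t = (if t = i then alpha G i else 0)"
  using LR_disj by (auto simp: vv_def)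
lemma vv_L_R: "i \<in> L \<Longrightarrow> t \<in> R \<Longrightarrow> vv G i t = - (phi G i * Bv G i t)"
  using LR_disj by (auto simp: vv_def)
lemma vv_R_L: "j \<in> R \<Longrightarrow> t \<in> L \<Longrightarrow> vv G j t = 0"
  using LR_disj by (auto simp: vv_def)
lemma vv_R_R: "j \<in> R \<Longrightarrow> t \<in> R \<Longrightarrow> vv G j t = (if t = j then 1 else 0)"
  using LR_disj by (auto simp: vv_def)

lemma alpha_phi: "(alpha G i)\<^sup>2 + (phi G i)\<^sup>2 * sv G i = 1"
proof -
  have p: "0 < 1 + eps\<^sup>2 * sv G i" using sv_nonneg[of G i] by (simp add: add_pos_nonneg)
  have "(alpha G i)\<^sup>2 = 1 / (1 + eps\<^sup>2 * sv G i)" using p by (simp add: alpha_def power_divide)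
  moreover have "(phi G i)\<^sup>2 = eps\<^sup>2 / (1 + eps\<^sup>2 * sv G i)" using p by (simp add: phi_def power_divide)
  ultimately have "(alpha G i)\<^sup>2 + (phi G i)\<^sup>2 * sv G i = 1 / (1 + eps\<^sup>2 * sv G i) + eps\<^sup>2 * sv G i / (1 + eps\<^sup>2 * sv G i)"
    by simp
  also have "\<dots> = (1 + eps\<^sup>2 * sv G i) / (1 + eps\<^sup>2 * sv G i)" by (rule add_divide_distrib[symmetric])
  also have "\<dots> = 1" using p by simp
  finally show ?thesis .
qed

lemma inner_LL: assumes i: "i \<in> L" and j: "j \<in> L"
  shows "inner_n n (vv G i) (vv G j) = (if i = j then 1 else Z G i j)"
proof -
  have s1: "(\<Sum>t\<in>L. vv G i t * vv G j t) = (if i = j then (alpha G i)\<^sup>2 else 0)"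
  proof -
    have "(\<Sum>t\<in>L. vv G i t * vv G j t) = (\<Sum>t\<in>L. if t = i then alpha G i * (if i = j then alpha G j else 0) else 0)"
      using i j by (intro sum.cong refl) (auto simp: vv_L_L)
    also have "\<dots> = (if i = j then (alpha G i)\<^sup>2 else 0)" using i by (simp add: power2_eq_square)
    finally show ?thesis .
  qed
  have s2: "(\<Sum>t\<in>R. vv G i t * vv G j t) = phi G i * phi G j * Xc G i j"
    using i j by (simp add: vv_L_R Xc_def sum_distrib_left mult_ac)
  have "inner_n n (vv G i) (vv G j) = (if i = j then (alpha G i)\<^sup>2 else 0) + phi G i * phi G j * Xc G i j"
    by (simp only: inner_split s1 s2)
  also have "\<dots> = (if i = j then 1 else Z G i j)"
    using alpha_phi[of G i] by (auto simp: Z_def Xc_def sv_def power2_eq_square)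
  finally show ?thesis .
qed

lemma inner_LR: assumes i: "i \<in> L" and j: "j \<in> R"
  shows "inner_n n (vv G i) (vv G j) = - (phi G i * Bv G i j)"
proof -
  have s1: "(\<Sum>t\<in>L. vv G i t * vv G j t) = 0" using j by (simp add: vv_R_L)
  have s2: "(\<Sum>t\<in>R. vv G i t * vv G j t) = (\<Sum>t\<in>R. if t = j then - (phi G i * Bv G i t) else 0)"
    using i j by (intro sum.cong refl) (auto simp: vv_L_R vv_R_R)
  show ?thesis unfolding inner_split s1 s2 using j by simp
qed

lemma inner_RR: assumes i: "i \<in> R" and j: "j \<in> R"
  shows "inner_n n (vv G i) (vv G j) = (if i = j then 1 else 0)"
proof -
  have s1: "(\<Sum>t\<in>L. vv G i t * vv G j t) = 0" using j by (simp add: vv_R_L)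
  have s2: "(\<Sum>t\<in>R. vv G i t * vv G j t) = (\<Sum>t\<in>R. if t = i then (if i = j then 1 else 0) else 0)"
    using i j by (intro sum.cong refl) (auto simp: vv_R_R)
  show ?thesis unfolding inner_split s1 s2 using i by simp
qed

lemma phiB_le: "phi G i * Bv G i j \<le> eps"
proof -
  have "phi G i * Bv G i j \<le> phi G i * 1" using Bv_abs[of G i j] phi_nonneg[of G i]
    by (intro mult_left_mono) auto
  thus ?thesis using phi_le[of G i] by simp
qed

lemma vv_feasible:
  assumes k: "2 \<le> k" and epsk: "eps \<le> 1 / (real k - 1)"
    and Zok: "\<And>i j. i \<in> L \<Longrightarrow> j \<in> L \<Longrightarrow> i \<noteq> j \<Longrightarrow> - 1 / (real k - 1) \<le> Z G i j"
  shows "fj_feasible n k (vv G)"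
proof -
  have km: "- 1 / (real k - 1) \<le> 0" using k by simp
  have LR: "x \<in> {1..n} \<Longrightarrow> x \<in> L \<or> x \<in> R" for x using LuR by auto
  show ?thesis unfolding fj_feasible_def
  proof (intro conjI ballI)
    fix i assume "i \<in> {1..n}"
    hence "i \<in> L \<or> i \<in> R" by (rule LR)
    thus "inner_n n (vv G i) (vv G i) = 1"
    proof
      assume "i \<in> L" thus ?thesis using inner_LL[of i i G] by simp
    next
      assume "i \<in> R" thus ?thesis using inner_RR[of i i G] by simp
    qed
  next
    fix i j assume i: "i \<in> {1..n}" and j: "j \<in> {1..n}"
    have lr: "- 1 / (real k - 1) \<le> - (phi G a * Bv G a b)" for a b
    proof -
      have "phi G a * Bv G a b \<le> 1 / (real k - 1)" using phiB_le[of G a b] epsk by linarith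
      moreover have "- 1 / (real k - 1) = - (1 / (real k - 1))" by simp
      ultimately show ?thesis by linarith
    qed
    show "- 1 / (real k - 1) \<le> inner_n n (vv G i) (vv G j)"
    proof (cases "i \<in> L")
      case iL: True
      show ?thesis
      proof (cases "j \<in> L")
        case jL: True
        show ?thesis
        proof (cases "i = j")
          case True
          have e1: "inner_n n (vv G i) (vv G j) = 1" using True jL iL inner_LL[of i j G] by simp
          show ?thesis using e1 km by linarith
        next
          case False thus ?thesis using jL iL Zok[of i j] inner_LL[of i j G] by simp
        qed
      next
        case False hence "j \<in> R" using LR[OF j] by auto
        thus ?thesis using iL lr by (simp add: inner_LR)
      qed
    next
      case False hence iR: "i \<in> R" using LR[OF i] by auto
      show ?thesis
      proof (cases "j \<in> L")
        case True thus ?thesis using iR lr by (simp add: inner_n_sym[of n "vv G i"] inner_LR)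
      next
        case False hence "j \<in> R" using LR[OF j] by auto
        hence "inner_n n (vv G i) (vv G j) = (if i = j then 1 else 0)" using iR by (simp add: inner_RR)
        hence "0 \<le> inner_n n (vv G i) (vv G j)" by simp
        thus ?thesis using km by linarith
      qed
    qed
  qed
qed

lemma pairs_split: "pairs n = LL \<union> LR \<union> RR"
  using h_le by (auto simp: pairs_def LL_def LR_def RR_def L_def R_def)

lemma fin_RR: "finite RR" using pairs_split finite_pairs by (metis finite_Un)
lemma fin_LR: "finite LR" using pairs_split finite_pairs by (metis finite_Un)

lemma disj3: "LL \<inter> LR = {}" "(LL \<union> LR) \<inter> RR = {}"
  using LR_disj by (auto simp: LL_def LR_def RR_def)

lemma sum_pairs: "(\<Sum>e\<in>pairs n. f e) = (\<Sum>e\<in>LL. f e) + (\<Sum>e\<in>LR. f e) + (\<Sum>e\<in>RR. f e)"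
  unfolding pairs_split
  by (subst sum.union_disjoint, use fin_LL fin_LR fin_RR disj3 in auto)
     (subst sum.union_disjoint, use fin_LL fin_LR disj3 in auto)

lemma sum_LR: "(\<Sum>e\<in>LR. f e) = (\<Sum>i\<in>L. \<Sum>j\<in>R. f (i,j))"
proof -
  have "LR = L \<times> R" by (auto simp: LR_def)
  thus ?thesis by (simp add: sum.cartesian_product)
qed

lemma vv_obj:
  "fj_objective n k G (vv G) =
     (real k - 1) / real k * (medges G + (1 - q) * (\<Sum>i\<in>L. phi G i * dg G i) - Pen G)"
proof -
  define c where "c = (real k - 1) / real k"
  define T where "T e = ind (G e) * c * (1 - inner_n n (vv G (fst e)) (vv G (snd e)))" for e
  have obj: "fj_objective n k G (vv G) = (\<Sum>e\<in>pairs n. T e)"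
    unfolding fj_objective_def T_def c_def by (intro sum.cong refl) (auto simp: ind_def)
  have tLL: "(\<Sum>e\<in>LL. T e) = c * ((\<Sum>e\<in>LL. ind (G e)) - Pen G)"
  proof -
    have "(\<Sum>e\<in>LL. T e) = (\<Sum>e\<in>LL. c * (ind (G e) - ind (G e) * Z G (fst e) (snd e)))"
      by (intro sum.cong refl) (auto simp: T_def inner_LL LL_def algebra_simps)
    also have "\<dots> = c * (\<Sum>e\<in>LL. ind (G e) - ind (G e) * Z G (fst e) (snd e))" by (simp add: sum_distrib_left)
    also have "\<dots> = c * ((\<Sum>e\<in>LL. ind (G e)) - Pen G)" by (simp add: sum_subtractf Pen_def)
    finally show ?thesis .
  qed
  have tLR: "(\<Sum>e\<in>LR. T e) = c * ((\<Sum>e\<in>LR. ind (G e)) + (1 - q) * (\<Sum>i\<in>L. phi G i * dg G i))"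
  proof -
    have "(\<Sum>e\<in>LR. T e) = (\<Sum>e\<in>LR. c * ind (G e) + c * (1 - q) * (ind (G e) * phi G (fst e)))"
    proof (intro sum.cong refl)
      fix e assume "e \<in> LR"
      then obtain i j where e: "e = (i,j)" "i \<in> L" "j \<in> R" by (auto simp: LR_def)
      have iB: "ind (G (i,j)) * Bv G i j = ind (G (i,j)) * (1 - q)" by (simp add: Bv_def ind_def)
      have "T e = ind (G (i,j)) * c * (1 + phi G i * Bv G i j)" using e by (simp add: T_def inner_LR)
      also have "\<dots> = c * ind (G (i,j)) + c * phi G i * (ind (G (i,j)) * Bv G i j)" by (simp add: algebra_simps)
      also have "\<dots> = c * ind (G (i,j)) + c * phi G i * (ind (G (i,j)) * (1 - q))" by (simp only: iB)
      also have "\<dots> = c * ind (G e) + c * (1 - q) * (ind (G e) * phi G (fst e))" using e by (simp add: algebra_simps)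
      finally show "T e = c * ind (G e) + c * (1 - q) * (ind (G e) * phi G (fst e))" .
    qed
    also have "\<dots> = c * (\<Sum>e\<in>LR. ind (G e)) + c * (1 - q) * (\<Sum>e\<in>LR. ind (G e) * phi G (fst e))"
      by (simp add: sum.distrib sum_distrib_left)
    also have "(\<Sum>e\<in>LR. ind (G e) * phi G (fst e)) = (\<Sum>i\<in>L. phi G i * dg G i)"
      by (simp add: sum_LR dg_def sum_distrib_left mult.commute)
    finally show ?thesis by (simp add: algebra_simps)
  qed
  have tRR: "(\<Sum>e\<in>RR. T e) = c * (\<Sum>e\<in>RR. ind (G e))"
    by (auto simp: T_def RR_def inner_RR sum_distrib_left intro!: sum.cong)
  have "fj_objective n k G (vv G) = c * ((\<Sum>e\<in>LL. ind (G e)) + (\<Sum>e\<in>LR. ind (G e)) + (\<Sum>e\<in>RR. ind (G e))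
          + (1 - q) * (\<Sum>i\<in>L. phi G i * dg G i) - Pen G)"
    unfolding obj sum_pairs tLL tLR tRR by (simp add: algebra_simps)
  also have "(\<Sum>e\<in>LL. ind (G e)) + (\<Sum>e\<in>LR. ind (G e)) + (\<Sum>e\<in>RR. ind (G e)) = medges G"
    unfolding medges_def by (rule sum_pairs[symmetric])
  finally show ?thesis by (simp add: c_def)
qed

end

context gs begin

lemma Xc_lower: "- q * (dg G i + dg G j) \<le> Xc G i j"
proof -
  have "(\<Sum>t\<in>R. - q * (ind (G (i,t)) + ind (G (j,t)))) \<le> (\<Sum>t\<in>R. Bv G i t * Bv G j t)"
  proof (rule sum_mono)
    fix t
    show "- q * (ind (G (i,t)) + ind (G (j,t))) \<le> Bv G i t * Bv G j t"
      using q_pos q_half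
      by (cases "G (i,t)"; cases "G (j,t)") (auto simp: Bv_def power2_eq_square algebra_simps mult_le_cancel_left1)
  qed
  also have "(\<Sum>t\<in>R. - q * (ind (G (i,t)) + ind (G (j,t)))) = - q * (\<Sum>t\<in>R. ind (G (i,t)) + ind (G (j,t)))"
    by (rule sum_distrib_left[symmetric])
  finally show ?thesis by (simp add: Xc_def dg_def sum.distrib)
qed

lemma sv_ge: "dg G i / 4 \<le> sv G i"
proof -
  have d0: "0 \<le> dg G i" by (rule dg_nonneg)
  have "dg G i * q\<^sup>2 \<le> r * q\<^sup>2" using dg_le[of G i] by (intro mult_right_mono) auto
  hence "dg G i * (1 - q)\<^sup>2 \<le> sv G i" by (simp add: sv_dg power2_eq_square algebra_simps)
  moreover have "dg G i / 4 \<le> dg G i * (1 - q)\<^sup>2"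
  proof -
    have "1/4 \<le> (1 - q)\<^sup>2"
    proof -
      have "(1/2::real)\<^sup>2 \<le> (1 - q)\<^sup>2" using q_half by (intro power_mono) auto
      thus ?thesis by (simp add: power2_eq_square)
    qed
    hence "dg G i * (1/4) \<le> dg G i * (1 - q)\<^sup>2" using d0 by (intro mult_left_mono) auto
    thus ?thesis by simp
  qed
  ultimately show ?thesis by linarith
qed

lemma phidg_le: "phi G i * dg G i \<le> 2 * sqrt (dg G i)"
proof -
  define d where "d = dg G i"
  have d0: "0 \<le> d" by (simp add: d_def dg_nonneg)
  define a where "a = 1 + eps\<^sup>2 * d / 4"
  have a1: "1 \<le> a" using d0 by (simp add: a_def)
  have "a \<le> 1 + eps\<^sup>2 * sv G i"
    using sv_ge[of G i] mult_left_mono[OF sv_ge[of G i], of "eps\<^sup>2"] by (simp add: a_def d_def)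
  hence sq: "sqrt a \<le> sqrt (1 + eps\<^sup>2 * sv G i)" by (rule real_sqrt_le_mono)
  have sa: "0 < sqrt a" using a1 by simp
  have "phi G i * d = eps * d / sqrt (1 + eps\<^sup>2 * sv G i)" by (simp add: phi_def)
  also have "\<dots> \<le> eps * d / sqrt a"
    using sq sa eps_pos d0 by (intro divide_left_mono) auto
  also have "\<dots> \<le> 2 * sqrt d"
  proof (rule power2_le_imp_le)
    have "(eps * d / sqrt a)\<^sup>2 = eps\<^sup>2 * d\<^sup>2 / a" using a1 by (simp add: power_divide power_mult_distrib)
    also have "\<dots> \<le> 4 * d"
    proof -
      have "eps\<^sup>2 * d\<^sup>2 \<le> 4 * d * a" by (simp add: a_def algebra_simps power2_eq_square d0)
      thus ?thesis using a1 by (simp add: divide_le_eq)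
    qed
    also have "\<dots> = (2 * sqrt d)\<^sup>2" using d0 by (simp add: power_mult_distrib)
    finally show "(eps * d / sqrt a)\<^sup>2 \<le> (2 * sqrt d)\<^sup>2" .
    show "0 \<le> 2 * sqrt d" using d0 by simp
  qed
  finally show ?thesis by (simp add: d_def)
qed

lemma eps_sqrt: "q * eps * sqrt n = sqrt q"
proof -
  have "eps * sqrt n = 1 / sqrt q" using n2 by (simp add: eps_def real_sqrt_mult)
  hence "q * eps * sqrt n = q / sqrt q" by (simp add: mult.assoc)
  also have "\<dots> = sqrt q" using q_pos by (simp add: real_div_sqrt)
  finally show ?thesis .
qed

lemma Z_sparse:
  assumes k: "2 \<le> k" and sp: "16 * q * (real k - 1)\<^sup>2 \<le> 1"
  shows "- 1 / (real k - 1) \<le> Z G i j"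
proof -
  have phn: "0 \<le> phi G i" "0 \<le> phi G j" by (rule phi_nonneg)+
  have pd: "phi G i * dg G i \<le> 2 * sqrt n" "phi G j * dg G j \<le> 2 * sqrt n"
  proof -
    have "sqrt (dg G i) \<le> sqrt n" "sqrt (dg G j) \<le> sqrt n" using dg_le r_le
      by (meson of_nat_le_iff order.trans real_sqrt_le_mono)+
    thus "phi G i * dg G i \<le> 2 * sqrt n" "phi G j * dg G j \<le> 2 * sqrt n"
      using phidg_le[of G i] phidg_le[of G j] by linarith+
  qed
  have "phi G i * phi G j * (- q * (dg G i + dg G j)) \<le> Z G i j"
    unfolding Z_def using Xc_lower[of G i j] phn by (intro mult_left_mono) auto
  moreover have "phi G i * phi G j * (q * (dg G i + dg G j)) \<le> 4 * sqrt q"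
  proof -
    have "phi G i * phi G j * (q * (dg G i + dg G j)) = q * (phi G j * (phi G i * dg G i) + phi G i * (phi G j * dg G j))"
      by (simp add: algebra_simps)
    also have "\<dots> \<le> q * (eps * (2 * sqrt n) + eps * (2 * sqrt n))"
    proof -
      have a: "phi G j * (phi G i * dg G i) \<le> eps * (2 * sqrt n)"
        by (rule mult_mono[OF phi_le pd(1) less_imp_le[OF eps_pos] mult_nonneg_nonneg[OF phn(1) dg_nonneg]])
      have b: "phi G i * (phi G j * dg G j) \<le> eps * (2 * sqrt n)"
        by (rule mult_mono[OF phi_le pd(2) less_imp_le[OF eps_pos] mult_nonneg_nonneg[OF phn(2) dg_nonneg]])
      show ?thesis using add_mono[OF a b] q_pos by (intro mult_left_mono) auto
    qed
    also have "\<dots> = 4 * (q * eps * sqrt n)" by (simp add: algebra_simps)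
    also have "\<dots> = 4 * sqrt q" by (simp add: eps_sqrt)
    finally show ?thesis .
  qed
  moreover have "4 * sqrt q \<le> 1 / (real k - 1)"
  proof -
    have k1: "0 < real k - 1" using k by simp
    have "(4 * sqrt q * (real k - 1))\<^sup>2 = 16 * q * (real k - 1)\<^sup>2" using q_pos by (simp add: power_mult_distrib)
    hence "(4 * sqrt q * (real k - 1))\<^sup>2 \<le> 1\<^sup>2" using sp by simp
    hence "4 * sqrt q * (real k - 1) \<le> 1" by (rule power2_le_imp_le) simp
    thus ?thesis using k1 by (simp add: le_divide_eq)
  qed
  ultimately show ?thesis by (simp add: algebra_simps)
qed

lemma Xc_codeg: "Xc G i j = codeg G i j - q * (dg G i + dg G j) + r * q\<^sup>2"
proof -
  have "Xc G i j = (\<Sum>t\<in>R. ind (G (i,t) \<and> G (j,t)) - q * (ind (G (i,t)) + ind (G (j,t))) + q\<^sup>2)"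
    unfolding Xc_def by (intro sum.cong refl) (simp add: Bv_def ind_def power2_eq_square algebra_simps)
  also have "\<dots> = codeg G i j - (\<Sum>t\<in>R. q * (ind (G (i,t)) + ind (G (j,t)))) + r * q\<^sup>2"
    by (simp add: sum.distrib sum_subtractf codeg_def)
  also have "(\<Sum>t\<in>R. q * (ind (G (i,t)) + ind (G (j,t)))) = q * (\<Sum>t\<in>R. ind (G (i,t)) + ind (G (j,t)))"
    by (rule sum_distrib_left[symmetric])
  finally show ?thesis by (simp add: dg_def sum.distrib)
qed

lemma Z_dense:
  assumes k: "2 \<le> k" and tau: "\<tau> = real n * q / (4 * (real k - 1))"
    and c: "real r * q\<^sup>2 - \<tau> < codeg G i j" and di: "dg G i < r * q + \<tau>" and dj: "dg G j < r * q + \<tau>"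
  shows "- 1 / (real k - 1) \<le> Z G i j"
proof -
  have k1: "0 < real k - 1" using k by simp
  have t0: "0 \<le> \<tau>" using tau q_pos k1 by simp
  have "Xc G i j > - 2 * \<tau>"
  proof -
    have "q * (dg G i + dg G j) \<le> q * (2 * (r * q) + 2 * \<tau>)" using di dj q_pos by (intro mult_left_mono) auto
    moreover have "q * \<tau> \<le> \<tau> / 2"
    proof -
      have "(2 * q) * \<tau> \<le> 1 * \<tau>" using q_half t0 by (intro mult_right_mono) auto
      thus ?thesis by simp
    qed
    ultimately show ?thesis using c unfolding Xc_codeg by (simp add: algebra_simps power2_eq_square)
  qed
  show ?thesis
  proof (cases "0 \<le> Xc G i j")
    case True
    hence "0 \<le> Z G i j" unfolding Z_def by (intro mult_nonneg_nonneg phi_nonneg)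
    moreover have "- 1 / (real k - 1) \<le> 0" using k1 by simp
    ultimately show ?thesis by linarith
  next
    case False
    have pp: "phi G i * phi G j \<le> eps * eps" by (intro mult_mono phi_le phi_nonneg) (use eps_pos in auto)
    have "eps * eps * Xc G i j \<le> phi G i * phi G j * Xc G i j"
      using False pp by (intro mult_right_mono_neg) auto
    moreover have "eps * eps * (- 2 * \<tau>) \<le> eps * eps * Xc G i j"
      using \<open>Xc G i j > - 2 * \<tau>\<close> by (intro mult_left_mono) auto
    moreover have "eps * eps * (- 2 * \<tau>) = - 1 / (2 * (real k - 1))"
      using q_pos n2 k1 unfolding tau eps_def by (simp add: field_simps)
    moreover have "- 1 / (real k - 1) \<le> - 1 / (2 * (real k - 1))" using k1 by (simp add: field_simps)
    ultimately show ?thesis unfolding Z_def by linarith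
  qed
qed

end

lemma aux6: "(K::real) \<noteq> 0 \<Longrightarrow> x / (2048 * K ^ 6) = x / (8 * K\<^sup>2) * (1 / (256 * K ^ 4))"
proof -
  assume "K \<noteq> 0"
  have "K ^ 6 = K\<^sup>2 * K ^ 4" by (simp flip: power_add)
  thus ?thesis using \<open>K \<noteq> 0\<close> by (simp add: field_simps)
qed

lemma aux2: "(K::real) \<noteq> 0 \<Longrightarrow> (n::real) \<noteq> 0 \<Longrightarrow> n / (8 * K\<^sup>2) * q\<^sup>2 = 2 * (n * q / (4 * K))\<^sup>2 / n"
  by (simp add: field_simps power2_eq_square)

context gs begin

lemma prob_dg_large: assumes i: "i \<in> L" and tau: "0 \<le> \<tau>"
  shows "Pr {G. r * q + \<tau> \<le> dg G i} \<le> exp (-2 * \<tau>\<^sup>2 / r)"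
proof -
  have R0: "R \<noteq> {}" using r_pos card_R by (metis card.empty not_one_le_zero)
  have H: "Pr {x. (\<Sum>t\<in>R. (\<lambda>t f. ind (f (i,t))) t (restrict x ((\<lambda>t. {(i,t)}) t))) \<ge>
       (\<Sum>t\<in>R. E (\<lambda>x. (\<lambda>t f. ind (f (i,t))) t (restrict x ((\<lambda>t. {(i,t)}) t)))) + \<tau>}
           \<le> exp (-2 * \<tau>\<^sup>2 / card R)"
  proof (rule hoeff(2))
    show "finite R" "R \<noteq> {}" by (simp_all add: R0)
    show "\<And>t. t \<in> R \<Longrightarrow> {(i,t)} \<subseteq> pairs n" using pair_LR[OF i] by auto
    show "disjoint_family_on (\<lambda>t. {(i,t)}) R" by (auto simp: disjoint_family_on_def)
    show "\<And>t. t \<in> R \<Longrightarrow> (\<lambda>f. ind (f (i,t))) \<in> borel_measurable (PiM {(i,t)} (\<lambda>_. count_space UNIV))"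
      unfolding ind_def by measurable
    show "\<And>t x. t \<in> R \<Longrightarrow> 0 \<le> ind (x (i,t)) \<and> ind (x (i,t)) \<le> 1" by simp
  qed (rule tau)
  moreover have "(\<Sum>t\<in>R. E (\<lambda>x. ind (restrict x {(i,t)} (i,t)))) = r * q"
    using E_ind_pair[OF i] by simp
  ultimately show ?thesis by (simp add: dg_def)
qed

lemma codeg_sym: "codeg G i j = codeg G j i" by (simp add: codeg_def conj_commute)
lemma Z_sym: "Z G i j = Z G j i" by (simp add: Z_def Xc_def mult_ac)

lemma prob_codeg_small: assumes i: "i \<in> L" and j: "j \<in> L" and ij: "i \<noteq> j" and tau: "0 \<le> \<tau>"
  shows "Pr {G. codeg G i j \<le> r * q\<^sup>2 - \<tau>} \<le> exp (-2 * \<tau>\<^sup>2 / r)"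
proof -
  have R0: "R \<noteq> {}" using r_pos card_R by (metis card.empty not_one_le_zero)
  have H: "Pr {x. (\<Sum>t\<in>R. (\<lambda>t f. ind (f (i,t) \<and> f (j,t))) t (restrict x ((\<lambda>t. {(i,t),(j,t)}) t))) \<le>
       (\<Sum>t\<in>R. E (\<lambda>x. (\<lambda>t f. ind (f (i,t) \<and> f (j,t))) t (restrict x ((\<lambda>t. {(i,t),(j,t)}) t)))) - \<tau>}
           \<le> exp (-2 * \<tau>\<^sup>2 / card R)"
  proof (rule hoeff(1))
    show "finite R" "R \<noteq> {}" by (simp_all add: R0)
    show "\<And>t. t \<in> R \<Longrightarrow> {(i,t),(j,t)} \<subseteq> pairs n" using pair_LR i j by auto
    show "disjoint_family_on (\<lambda>t. {(i,t),(j,t)}) R" by (auto simp: disjoint_family_on_def)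
    show "\<And>t. t \<in> R \<Longrightarrow> (\<lambda>f. ind (f (i,t) \<and> f (j,t))) \<in> borel_measurable (PiM {(i,t),(j,t)} (\<lambda>_. count_space UNIV))"
      unfolding ind_def by measurable
    show "\<And>t x. t \<in> R \<Longrightarrow> 0 \<le> ind (x (i,t) \<and> x (j,t)) \<and> ind (x (i,t) \<and> x (j,t)) \<le> 1" by simp
  qed (rule tau)
  moreover have "E (\<lambda>x. ind (x (i,t) \<and> x (j,t))) = q\<^sup>2" if t: "t \<in> R" for t
  proof -
    have "E (\<lambda>x. ind (x (i,t) \<and> x (j,t))) = E (\<lambda>x. ind (x (i,t)) * ind (x (j,t)))" by (simp add: ind_and)
    also have "\<dots> = E (\<lambda>x. ind (x (i,t))) * E (\<lambda>x. ind (x (j,t)))"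
      using pair_LR[OF i t] pair_LR[OF j t] ij by (intro indep[of "{(i,t)}" "{(j,t)}"] dep_ind) auto
    finally show ?thesis using E_ind_pair[OF i t] E_ind_pair[OF j t] by (simp add: power2_eq_square)
  qed
  hence "(\<Sum>t\<in>R. E (\<lambda>x. ind (restrict x {(i,t),(j,t)} (i,t) \<and> restrict x {(i,t),(j,t)} (j,t)))) = r * q\<^sup>2"
    by simp
  ultimately show ?thesis by (simp add: codeg_def)
qed

lemma card_LL_le: "real (card LL) \<le> real n ^ 2"
proof -
  have "LL \<subseteq> L \<times> L" by (auto simp: LL_def)
  hence "card LL \<le> card (L \<times> L)" by (intro card_mono) auto
  also have "\<dots> = h * h" by (simp add: card_cartesian_product)
  also have "\<dots> \<le> n * n" using h_le by (intro mult_mono) auto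
  finally show ?thesis by (simp add: power2_eq_square) (metis of_nat_le_iff of_nat_mult)
qed

lemma prob_constraint_bad:
  assumes k: "2 \<le> k"
  shows "Pr {G. \<exists>i\<in>L. \<exists>j\<in>L. i \<noteq> j \<and> Z G i j < - 1 / (real k - 1)}
           \<le> (n + real n ^ 2) * exp (- real n / (2048 * (real k - 1) ^ 6))"
proof (cases "16 * q * (real k - 1)\<^sup>2 \<le> 1")
  case True
  have "{G. \<exists>i\<in>L. \<exists>j\<in>L. i \<noteq> j \<and> Z G i j < - 1 / (real k - 1)} = {}"
  proof (safe)
    fix G i j assume "i \<in> L" "j \<in> L" "i \<noteq> j" "Z G i j < - 1 / (real k - 1)"
    thus "G \<in> {}" using Z_sparse[OF k True, of G i j] by linarith
  qed
  hence "Pr {G. \<exists>i\<in>L. \<exists>j\<in>L. i \<noteq> j \<and> Z G i j < - 1 / (real k - 1)} = 0" by (metis measure_empty)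
  moreover have "0 \<le> (n + real n ^ 2) * exp (- real n / (2048 * (real k - 1) ^ 6))" by simp
  ultimately show ?thesis by linarith
next
  case False
  have k1: "0 < real k - 1" using k by simp
  define \<tau> where "\<tau> = real n * q / (4 * (real k - 1))"
  have t0: "0 \<le> \<tau>" using q_pos k1 by (simp add: \<tau>_def)
  define B1 where "B1 i = {G :: nat \<times> nat \<Rightarrow> bool. r * q + \<tau> \<le> dg G i}" for i :: nat
  define B2 where "B2 e = {G :: nat \<times> nat \<Rightarrow> bool. codeg G (fst e) (snd e) \<le> r * q\<^sup>2 - \<tau>}" for e :: "nat \<times> nat"
  have sub: "{G. \<exists>i\<in>L. \<exists>j\<in>L. i \<noteq> j \<and> Z G i j < - 1 / (real k - 1)} \<subseteq> (\<Union>i\<in>L. B1 i) \<union> (\<Union>e\<in>LL. B2 e)"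
  proof
    fix G assume "G \<in> {G. \<exists>i\<in>L. \<exists>j\<in>L. i \<noteq> j \<and> Z G i j < - 1 / (real k - 1)}"
    then obtain i j where ij: "i \<in> L" "j \<in> L" "i \<noteq> j" and Zb: "Z G i j < - 1 / (real k - 1)" by auto
    show "G \<in> (\<Union>i\<in>L. B1 i) \<union> (\<Union>e\<in>LL. B2 e)"
    proof (rule ccontr)
      assume "G \<notin> (\<Union>i\<in>L. B1 i) \<union> (\<Union>e\<in>LL. B2 e)"
      hence d: "\<And>a. a \<in> L \<Longrightarrow> dg G a < r * q + \<tau>" and c: "\<And>e. e \<in> LL \<Longrightarrow> r * q\<^sup>2 - \<tau> < codeg G (fst e) (snd e)"
        by (auto simp: B1_def B2_def not_le)
      have "r * q\<^sup>2 - \<tau> < codeg G i j"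
      proof (cases "i < j")
        case True thus ?thesis using c[of "(i,j)"] ij by (auto simp: LL_def)
      next
        case False hence "j < i" using ij by auto
        thus ?thesis using c[of "(j,i)"] ij codeg_sym[of G i j] by (auto simp: LL_def)
      qed
      hence "- 1 / (real k - 1) \<le> Z G i j" using Z_dense[OF k \<tau>_def _ d d] ij by auto
      thus False using Zb by simp
    qed
  qed
  have ex: "exp (-2 * \<tau>\<^sup>2 / r) \<le> exp (- real n / (2048 * (real k - 1) ^ 6))"
  proof -
    have q16: "1 / (16 * (real k - 1)\<^sup>2) < q" using False k1 by (simp add: field_simps)
    have "(1 / (16 * (real k - 1)\<^sup>2))\<^sup>2 \<le> q\<^sup>2" using q16 k1 by (intro power_mono) auto
    hence qq: "1 / (256 * (real k - 1) ^ 4) \<le> q\<^sup>2" by (simp add: power_divide power_mult_distrib)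
    have "real n / (2048 * (real k - 1) ^ 6) = real n / (8 * (real k - 1)\<^sup>2) * (1 / (256 * (real k - 1) ^ 4))"
      using k1 by (intro aux6) simp
    also have "\<dots> \<le> real n / (8 * (real k - 1)\<^sup>2) * q\<^sup>2" using qq by (intro mult_left_mono) auto
    also have "\<dots> = 2 * \<tau>\<^sup>2 / real n" unfolding \<tau>_def using n2 k1 by (intro aux2) auto
    also have "\<dots> \<le> 2 * \<tau>\<^sup>2 / r" using r_pos r_le by (intro divide_left_mono) auto
    finally show ?thesis by simp
  qed
  have "Pr {G. \<exists>i\<in>L. \<exists>j\<in>L. i \<noteq> j \<and> Z G i j < - 1 / (real k - 1)} \<le> Pr ((\<Union>i\<in>L. B1 i) \<union> (\<Union>e\<in>LL. B2 e))"
    by (rule measure_pmf.finite_measure_mono[OF sub]) simp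
  also have "\<dots> \<le> Pr (\<Union>i\<in>L. B1 i) + Pr (\<Union>e\<in>LL. B2 e)" by (rule measure_Un_le) simp_all
  also have "\<dots> \<le> (\<Sum>i\<in>L. exp (-2 * \<tau>\<^sup>2 / r)) + (\<Sum>e\<in>LL. exp (-2 * \<tau>\<^sup>2 / r))"
  proof (rule add_mono)
    have "Pr (\<Union>i\<in>L. B1 i) \<le> (\<Sum>i\<in>L. Pr (B1 i))" by (rule measure_pmf.finite_measure_subadditive_finite) auto
    also have "(\<Sum>i\<in>L. Pr (B1 i)) \<le> (\<Sum>i\<in>L. exp (-2 * \<tau>\<^sup>2 / r))"
      by (intro sum_mono) (unfold B1_def, rule prob_dg_large[OF _ t0])
    finally show "Pr (\<Union>i\<in>L. B1 i) \<le> (\<Sum>i\<in>L. exp (-2 * \<tau>\<^sup>2 / r))" .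
    have "Pr (\<Union>e\<in>LL. B2 e) \<le> (\<Sum>e\<in>LL. Pr (B2 e))" by (rule measure_pmf.finite_measure_subadditive_finite) auto
    also have "(\<Sum>e\<in>LL. Pr (B2 e)) \<le> (\<Sum>e\<in>LL. exp (-2 * \<tau>\<^sup>2 / r))"
      by (intro sum_mono) (unfold B2_def, rule prob_codeg_small[OF _ _ _ t0], auto dest: LL_props)
    finally show "Pr (\<Union>e\<in>LL. B2 e) \<le> (\<Sum>e\<in>LL. exp (-2 * \<tau>\<^sup>2 / r))" .
  qed
  also have "\<dots> = (h + card LL) * exp (-2 * \<tau>\<^sup>2 / r)"
    by (simp add: algebra_simps)
  also have "\<dots> \<le> (n + real n ^ 2) * exp (- real n / (2048 * (real k - 1) ^ 6))"
  proof -
    have "real h \<le> real n" using h_le by simp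
    from add_mono[OF this card_LL_le] have hh: "real h + real (card LL) \<le> real n + real n ^ 2" .
    show ?thesis by (rule mult_mono[OF _ ex]) (use hh in auto)
  qed
  finally show ?thesis .
qed

end

lemma card_pairs: "card (pairs n) = n choose 2"
proof (induction n)
  case 0
  have "pairs 0 = {}" by (auto simp: pairs_def)
  thus ?case by simp
next
  case (Suc n)
  have eq: "pairs (Suc n) = pairs n \<union> (\<lambda>i. (i, Suc n)) ` {1..n}"
    by (auto simp: pairs_def)
  have "card (pairs (Suc n)) = card (pairs n) + card ((\<lambda>i. (i, Suc n)) ` {1..n})"
    unfolding eq by (rule card_Un_disjoint) (simp add: finite_pairs, simp, auto simp: pairs_def)
  also have "card ((\<lambda>i. (i, Suc n)) ` {1..n}) = n" by (subst card_image) (auto simp: inj_on_def)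
  finally show ?case using Suc.IH by (simp add: numeral_2_eq_2)
qed

context gs begin

definition "tt = real n * sqrt (real n * q) / 768"

lemma nq_pos: "0 < real n * q" using n2 q_pos by simp
lemma tt_pos: "0 < tt" using nq_pos n2 by (simp add: tt_def)
lemma tt_sq: "tt\<^sup>2 = real n ^ 3 * q / 768\<^sup>2"
  using nq_pos by (simp add: tt_def power_divide power_mult_distrib power3_eq_cube power2_eq_square)

lemma card_pairs_le: "real (card (pairs n)) \<le> real n ^ 2"
proof -
  have "pairs n \<subseteq> {1..n} \<times> {1..n}" by (auto simp: pairs_def)
  hence "card (pairs n) \<le> card ({1..n} \<times> {1..n})" by (intro card_mono) auto
  also have "\<dots> = n * n" by (simp add: card_cartesian_product)
  finally show ?thesis by (simp add: power2_eq_square) (metis of_nat_le_iff of_nat_mult)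
qed

lemma prob_e1: "Pr {G. medges G < card (pairs n) * q - tt} \<le> 768\<^sup>2 / n"
proof -
  have "Pr {G. medges G < card (pairs n) * q - tt} \<le> Pr {G. tt \<le> \<bar>medges G - card (pairs n) * q\<bar>}"
    by (rule measure_pmf.finite_measure_mono) auto
  also have "\<dots> \<le> E (\<lambda>G. (medges G - card (pairs n) * q)\<^sup>2) / tt\<^sup>2" by (rule Cheb[OF tt_pos])
  also have "\<dots> = card (pairs n) * q * (1 - q) / tt\<^sup>2" by (simp add: var_medges)
  also have "\<dots> \<le> real n ^ 2 * q / tt\<^sup>2"
  proof (rule divide_right_mono)
    have "card (pairs n) * q * (1 - q) \<le> card (pairs n) * q" using q_pos by (simp add: mult_left_le)
    also have "\<dots> \<le> real n ^ 2 * q" using card_pairs_le q_pos by (intro mult_right_mono) auto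
    finally show "card (pairs n) * q * (1 - q) \<le> real n ^ 2 * q" .
  qed simp
  also have "\<dots> = 768\<^sup>2 / n" unfolding tt_sq using q_pos n2 by (simp add: field_simps power2_eq_square power3_eq_cube)
  finally show ?thesis .
qed

lemma h_ge: "real n \<le> 3 * real h"
  using h_pos n2 by (simp add: h_def)

lemma prob_e2: assumes "2 \<le> real r * q"
  shows "Pr {G. (\<Sum>i\<in>L. Y G i) < real h * (real r * q) / 4} \<le> 96 / n"
proof -
  have "32 / real h \<le> 96 / real n" using h_ge h_pos n2 by (simp add: field_simps)
  thus ?thesis using sumY_event[OF assms] by linarith
qed

lemma prob_e3: "Pr {G. tt \<le> \<bar>W G\<bar>} \<le> 768\<^sup>2 / real n ^ 2"
proof -
  have "Pr {G. tt \<le> \<bar>W G\<bar>} \<le> E (\<lambda>G. (W G)\<^sup>2) / tt\<^sup>2" by (rule Cheb[OF tt_pos])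
  also have "\<dots> \<le> (real n * q) / tt\<^sup>2"
  proof (rule divide_right_mono)
    have "E (\<lambda>G. (W G)\<^sup>2) \<le> card LL * (q * (eps ^ 4 * (r * q\<^sup>2)))" by (rule E_W_sq)
    also have "\<dots> \<le> real n ^ 2 * (q * (eps ^ 4 * (real n * q\<^sup>2)))"
      using card_LL_le r_le q_pos by (intro mult_mono) auto
    also have "\<dots> = real n * q"
    proof -
      have "eps ^ 4 = (eps\<^sup>2)\<^sup>2" by (simp flip: power_mult)
      hence "eps ^ 4 = (1 / (real n * q))\<^sup>2" by (simp only: eps_sq)
      thus ?thesis using nq_pos q_pos n2 by (simp add: power2_eq_square field_simps)
    qed
    finally show "E (\<lambda>G. (W G)\<^sup>2) \<le> real n * q" .
  qed simp
  also have "\<dots> = 768\<^sup>2 / real n ^ 2" unfolding tt_sq using q_pos n2 by (simp add: field_simps power2_eq_square power3_eq_cube)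
  finally show ?thesis .
qed

lemma prob_e4: assumes nq1: "1 \<le> real n * q"
  shows "Pr {G. tt \<le> q / 2 * (\<Sum>t\<in>R. (U G t)\<^sup>2)} \<le> 768 / sqrt n"
proof -
  have EU: "E (\<lambda>G. (U G t)\<^sup>2) \<le> 2" if t: "t \<in> R" for t
  proof -
    have a: "h * (eps\<^sup>2 * q) \<le> 1" using h_le n2 q_pos by (simp add: eps_sq field_simps)
    have "(h * (q * eps ^ 3 / 2))\<^sup>2 = h\<^sup>2 * q\<^sup>2 * (eps ^ 3)\<^sup>2 / 4" by (simp add: power_mult_distrib power_divide)
    also have "(eps ^ 3)\<^sup>2 = (eps\<^sup>2) ^ 3" by (simp flip: power_mult)
    also have "\<dots> = (1 / (real n * q)) ^ 3" by (simp only: eps_sq)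
    also have "h\<^sup>2 * q\<^sup>2 * (1 / (real n * q)) ^ 3 / 4 = h\<^sup>2 / (4 * real n ^ 3 * q)"
      using q_pos n2 by (simp add: field_simps power2_eq_square power3_eq_cube)
    also have "\<dots> \<le> 1"
    proof -
      have "real h ^ 2 \<le> real n ^ 2" using h_le by (simp add: power_mono)
      also have "\<dots> \<le> 4 * real n ^ 3 * q"
      proof -
        have "real n ^ 2 * 1 \<le> real n ^ 2 * (4 * (real n * q))" using nq1 by (intro mult_left_mono) auto
        thus ?thesis by (simp add: power2_eq_square power3_eq_cube algebra_simps)
      qed
      finally have hh: "real h ^ 2 \<le> 4 * real n ^ 3 * q" .
      have pos: "0 < 4 * real n ^ 3 * q" using q_pos n2 by simp
      show ?thesis using hh by (simp add: divide_le_eq_1_pos[OF pos])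
    qed
    finally have b: "(h * (q * eps ^ 3 / 2))\<^sup>2 \<le> 1" .
    show ?thesis using E_U_sq[OF t] a b by linarith
  qed
  have nn: "\<And>G. 0 \<le> q / 2 * (\<Sum>t\<in>R. (U G t)\<^sup>2)" using q_pos by (simp add: sum_nonneg)
  have "Pr {G. tt \<le> q / 2 * (\<Sum>t\<in>R. (U G t)\<^sup>2)} \<le> E (\<lambda>G. q / 2 * (\<Sum>t\<in>R. (U G t)\<^sup>2)) / tt"
    by (rule Markov[OF nn tt_pos])
  also have "E (\<lambda>G. q / 2 * (\<Sum>t\<in>R. (U G t)\<^sup>2)) \<le> q / 2 * (2 * real n)"
  proof -
    have "E (\<lambda>G. q / 2 * (\<Sum>t\<in>R. (U G t)\<^sup>2)) = q / 2 * (\<Sum>t\<in>R. E (\<lambda>G. (U G t)\<^sup>2))" by (simp add: E_sum)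
    also have "\<dots> \<le> q / 2 * (\<Sum>t\<in>R. 2)" using q_pos EU by (intro mult_left_mono sum_mono) auto
    also have "\<dots> \<le> q / 2 * (2 * real n)" using q_pos r_le by (intro mult_left_mono) auto
    finally show ?thesis .
  qed
  hence "E (\<lambda>G. q / 2 * (\<Sum>t\<in>R. (U G t)\<^sup>2)) / tt \<le> q / 2 * (2 * real n) / tt"
    using tt_pos by (intro divide_right_mono) auto
  also have "\<dots> = 768 * sqrt q / sqrt n"
  proof -
    have "sqrt (real n * q) = sqrt n * sqrt q" by (simp add: real_sqrt_mult)
    moreover have "q = sqrt q * sqrt q" using q_pos by simp
    ultimately show ?thesis using q_pos n2 unfolding tt_def by (simp add: field_simps)
  qed
  also have "\<dots> \<le> 768 / sqrt n"
  proof -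
    have "sqrt q \<le> 1" using q_half by simp
    thus ?thesis using n2 by (simp add: divide_right_mono)
  qed
  finally show ?thesis .
qed

lemma good_event:
  assumes k: "2 \<le> k" and nqk: "real k ^ 2 \<le> real n * q"
    and m: "card (pairs n) * q - tt \<le> medges G"
    and Ys: "real h * (real r * q) / 4 \<le> (\<Sum>i\<in>L. Y G i)"
    and w: "\<bar>W G\<bar> < tt" and u: "q / 2 * (\<Sum>t\<in>R. (U G t)\<^sup>2) < tt"
    and cons: "\<not> (\<exists>i\<in>L. \<exists>j\<in>L. i \<noteq> j \<and> Z G i j < - 1 / (real k - 1))"
  shows "(1 - 1 / real k) * real (n choose 2) * q + real n * sqrt (real n * q) / 512 \<le> SDP n k G"
proof -
  have k1: "1 \<le> real k - 1" using k by simp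
  define c where "c = (real k - 1) / real k"
  have c2: "1/2 \<le> c" using k by (simp add: c_def field_simps)
  have epsk: "eps \<le> 1 / (real k - 1)"
  proof -
    have "eps\<^sup>2 \<le> (1 / (real k - 1))\<^sup>2"
    proof -
      have "(real k - 1)\<^sup>2 \<le> real k ^ 2" using k1 by (intro power_mono) auto
      also have "\<dots> \<le> real n * q" by (rule nqk)
      finally have "(real k - 1)\<^sup>2 \<le> real n * q" .
      thus ?thesis using k1 nq_pos by (simp add: eps_sq power_divide frac_le)
    qed
    thus ?thesis by (rule power2_le_imp_le) (use k1 in simp)
  qed
  have feas: "fj_feasible n k (vv G)"
    by (rule vv_feasible[OF k epsk]) (use cons in \<open>auto simp: not_less\<close>)
  have obj: "fj_objective n k G (vv G) = c * (medges G + (1 - q) * (\<Sum>i\<in>L. phi G i * dg G i) - Pen G)"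
    by (simp add: vv_obj c_def)
  have gain: "6 * tt \<le> (1 - q) * (\<Sum>i\<in>L. phi G i * dg G i)"
  proof -
    have "eps / 4 * (\<Sum>i\<in>L. Y G i) \<le> (1 - q) * (\<Sum>i\<in>L. phi G i * dg G i)"
    proof -
      have "(\<Sum>i\<in>L. eps / 2 * Y G i) \<le> (\<Sum>i\<in>L. phi G i * dg G i)" by (intro sum_mono gain_pointwise)
      hence "eps / 2 * (\<Sum>i\<in>L. Y G i) \<le> (\<Sum>i\<in>L. phi G i * dg G i)" by (simp add: sum_distrib_left)
      moreover have "0 \<le> (\<Sum>i\<in>L. phi G i * dg G i)" by (intro sum_nonneg mult_nonneg_nonneg phi_nonneg dg_nonneg)
      moreover have "1/2 \<le> 1 - q" using q_half by simp
      ultimately have "1/2 * (eps / 2 * (\<Sum>i\<in>L. Y G i)) \<le> (1 - q) * (\<Sum>i\<in>L. phi G i * dg G i)"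
      proof (intro mult_mono)
        show "0 \<le> 1 - q" using q_half by simp
        show "0 \<le> eps / 2 * (\<Sum>i\<in>L. Y G i)" using eps_pos by (intro mult_nonneg_nonneg sum_nonneg Y_nonneg) auto
      qed
      thus ?thesis by simp
    qed
    moreover have "6 * tt \<le> eps / 4 * (\<Sum>i\<in>L. Y G i)"
    proof -
      have "eps / 4 * (real h * (real r * q) / 4) \<le> eps / 4 * (\<Sum>i\<in>L. Y G i)"
        using Ys eps_pos by (intro mult_left_mono) auto
      moreover have "6 * tt \<le> eps / 4 * (real h * (real r * q) / 4)"
      proof -
        have "real n ^ 2 / 8 * q \<le> real h * real r * q" using hr_ge q_pos by (intro mult_right_mono) auto
        hence "eps * (real n ^ 2 / 8 * q) \<le> eps * (real h * real r * q)" using eps_pos by (intro mult_left_mono) auto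
        moreover have "eps * (real n ^ 2 / 8 * q) = real n * sqrt (real n * q) / 8"
        proof -
          have "real n * q = sqrt (real n * q) * sqrt (real n * q)" using nq_pos by simp
          have "eps * (real n * q) = sqrt (real n * q)" using nq_pos by (simp add: eps_def real_div_sqrt)
          thus ?thesis by (simp add: power2_eq_square algebra_simps)
        qed
        ultimately show ?thesis by (simp add: tt_def algebra_simps)
      qed
      ultimately show ?thesis by linarith
    qed
    ultimately show ?thesis by linarith
  qed
  have pen: "Pen G < 2 * tt" using Pen_le[of G] w u by linarith
  have "c * (card (pairs n) * q) + 3 / 2 * tt \<le> c * (card (pairs n) * q) + c * (3 * tt)"
    using c2 tt_pos by simp
  also have "\<dots> = c * (card (pairs n) * q - tt + 6 * tt - 2 * tt)" by (simp add: algebra_simps)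
  also have "\<dots> \<le> c * (medges G + (1 - q) * (\<Sum>i\<in>L. phi G i * dg G i) - Pen G)"
    using m gain pen c2 by (intro mult_left_mono) auto
  also have "\<dots> = fj_objective n k G (vv G)" by (simp add: obj)
  also have "\<dots> \<le> SDP n k G" by (rule SDP_ge[OF k feas])
  finally have "c * (card (pairs n) * q) + 3 / 2 * tt \<le> SDP n k G" .
  moreover have "c = 1 - 1 / real k" using k by (simp add: c_def field_simps)
  moreover have "3 / 2 * tt = real n * sqrt (real n * q) / 512" by (simp add: tt_def)
  ultimately show ?thesis by (simp add: card_pairs mult.assoc)
qed

end

context gs begin

lemma r_ge: "real n / 2 \<le> real r" by (simp add: r_def h_def)

lemma main_prob:
  assumes k: "2 \<le> k" and nqk: "2 * real k ^ 2 \<le> real n * q"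
  shows "1 - (768\<^sup>2 / real n + 96 / real n + 768\<^sup>2 / real n ^ 2 + 768 / sqrt (real n)
            + (real n + real n ^ 2) * exp (- real n / (2048 * (real k - 1) ^ 6)))
         \<le> Pr {G. (1 - 1 / real k) * real (n choose 2) * q + real n * sqrt (real n * q) / 512 \<le> SDP n k G}"
proof -
  have "(2::real) ^ 2 \<le> real k ^ 2" using k by (intro power_mono) auto
  hence k4: "4 \<le> real k ^ 2" by simp
  have nq1: "1 \<le> real n * q" using k4 nqk by linarith
  have nqk': "real k ^ 2 \<le> real n * q" using nqk k4 by linarith
  have rq2: "2 \<le> real r * q"
  proof -
    have "real n / 2 * q \<le> real r * q" using r_ge q_pos by (intro mult_right_mono) auto
    thus ?thesis using nqk k4 by simp
  qed
  define B1 where "B1 = {G. medges G < card (pairs n) * q - tt}"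
  define B2 where "B2 = {G. (\<Sum>i\<in>L. Y G i) < real h * (real r * q) / 4}"
  define B3 where "B3 = {G. tt \<le> \<bar>W G\<bar>}"
  define B4 where "B4 = {G. tt \<le> q / 2 * (\<Sum>t\<in>R. (U G t)\<^sup>2)}"
  define B5 where "B5 = {G. \<exists>i\<in>L. \<exists>j\<in>L. i \<noteq> j \<and> Z G i j < - 1 / (real k - 1)}"
  define T where "T = {G. (1 - 1 / real k) * real (n choose 2) * q + real n * sqrt (real n * q) / 512 \<le> SDP n k G}"
  have sub: "UNIV - (B1 \<union> B2 \<union> B3 \<union> B4 \<union> B5) \<subseteq> T"
  proof
    fix G assume "G \<in> UNIV - (B1 \<union> B2 \<union> B3 \<union> B4 \<union> B5)"
    hence "card (pairs n) * q - tt \<le> medges G" "real h * (real r * q) / 4 \<le> (\<Sum>i\<in>L. Y G i)"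
      "\<bar>W G\<bar> < tt" "q / 2 * (\<Sum>t\<in>R. (U G t)\<^sup>2) < tt"
      "\<not> (\<exists>i\<in>L. \<exists>j\<in>L. i \<noteq> j \<and> Z G i j < - 1 / (real k - 1))"
      unfolding B1_def B2_def B3_def B4_def B5_def by auto
    thus "G \<in> T" unfolding T_def using good_event[OF k nqk'] by blast
  qed
  have "Pr (B1 \<union> B2 \<union> B3 \<union> B4 \<union> B5) \<le> Pr B1 + Pr B2 + Pr B3 + Pr B4 + Pr B5"
  proof -
    have "Pr (B1 \<union> B2 \<union> B3 \<union> B4 \<union> B5) \<le> Pr (B1 \<union> B2 \<union> B3 \<union> B4) + Pr B5" by (rule measure_Un_le) auto
    moreover have "Pr (B1 \<union> B2 \<union> B3 \<union> B4) \<le> Pr (B1 \<union> B2 \<union> B3) + Pr B4" by (rule measure_Un_le) auto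
    moreover have "Pr (B1 \<union> B2 \<union> B3) \<le> Pr (B1 \<union> B2) + Pr B3" by (rule measure_Un_le) auto
    moreover have "Pr (B1 \<union> B2) \<le> Pr B1 + Pr B2" by (rule measure_Un_le) auto
    ultimately show ?thesis by linarith
  qed
  also have "\<dots> \<le> 768\<^sup>2 / real n + 96 / real n + 768\<^sup>2 / real n ^ 2 + 768 / sqrt (real n)
            + (real n + real n ^ 2) * exp (- real n / (2048 * (real k - 1) ^ 6))"
    using prob_e1 prob_e2[OF rq2] prob_e3 prob_e4[OF nq1] prob_constraint_bad[OF k]
    unfolding B1_def B2_def B3_def B4_def B5_def by (intro add_mono) auto
  finally have bad: "Pr (B1 \<union> B2 \<union> B3 \<union> B4 \<union> B5) \<le> 768\<^sup>2 / real n + 96 / real n + 768\<^sup>2 / real n ^ 2 + 768 / sqrt (real n)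
            + (real n + real n ^ 2) * exp (- real n / (2048 * (real k - 1) ^ 6))" .
  have "Pr (UNIV - (B1 \<union> B2 \<union> B3 \<union> B4 \<union> B5)) = 1 - Pr (B1 \<union> B2 \<union> B3 \<union> B4 \<union> B5)"
    using measure_pmf.prob_compl[of "B1 \<union> B2 \<union> B3 \<union> B4 \<union> B5" M] by simp
  moreover have "Pr (UNIV - (B1 \<union> B2 \<union> B3 \<union> B4 \<union> B5)) \<le> Pr T"
    by (rule measure_pmf.finite_measure_mono[OF sub]) simp
  ultimately show ?thesis using bad unfolding T_def by linarith
qed

end

theorem corollary1:
  shows "\<exists>C>0. \<forall>c0\<ge>C. \<exists>c1>0. \<forall>k::nat. \<forall>p::nat \<Rightarrow> real.
     k \<ge> 2 \<longrightarrow>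
     (\<forall>\<^sub>F n in sequentially. c0 * real k ^ 2 / real n \<le> p n \<and> p n \<le> 1 / 2) \<longrightarrow>
     (\<lambda>n. measure_pmf.prob (gnp n (p n))
        {G. SDP n k G \<ge> (1 - 1 / real k) * real (n choose 2) * p n
                          + c1 * real n powr (3/2) * p n powr (1/2)})
       \<longlonglongrightarrow> 1"
proof (rule exI[of _ 2], intro conjI allI impI)
  fix c0 :: real assume c0: "2 \<le> c0"
  show "\<exists>c1>0. \<forall>k::nat. \<forall>p::nat \<Rightarrow> real.
     k \<ge> 2 \<longrightarrow>
     (\<forall>\<^sub>F n in sequentially. c0 * real k ^ 2 / real n \<le> p n \<and> p n \<le> 1 / 2) \<longrightarrow>
     (\<lambda>n. measure_pmf.prob (gnp n (p n))
        {G. SDP n k G \<ge> (1 - 1 / real k) * real (n choose 2) * p n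
                          + c1 * real n powr (3/2) * p n powr (1/2)})
       \<longlonglongrightarrow> 1"
  proof (rule exI[of _ "1/512"], intro conjI allI impI)
    fix k :: nat and p :: "nat \<Rightarrow> real"
    assume k: "2 \<le> k" and ev: "\<forall>\<^sub>F n in sequentially. c0 * real k ^ 2 / real n \<le> p n \<and> p n \<le> 1 / 2"
    define K where "K = 2048 * (real k - 1) ^ 6"
    have K0: "0 < K" using k by (simp add: K_def)
    define err where "err n = 768\<^sup>2 / real n + 96 / real n + 768\<^sup>2 / real n ^ 2 + 768 / sqrt (real n)
            + (real n + real n ^ 2) * exp (- real n / K)" for n :: nat
    have err0: "err \<longlonglongrightarrow> 0" unfolding err_def using K0 by real_asymp
    define P where "P n = measure_pmf.prob (gnp n (p n))
        {G. SDP n k G \<ge> (1 - 1 / real k) * real (n choose 2) * p n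
                          + 1 / 512 * real n powr (3/2) * p n powr (1/2)}" for n
    have lower: "\<forall>\<^sub>F n in sequentially. 1 - err n \<le> P n"
      using ev eventually_ge_at_top[of 2]
    proof eventually_elim
      case (elim n)
      have n2: "2 \<le> n" using elim by simp
      have kpos: "0 < c0 * real k ^ 2 / real n" using c0 k n2 by simp
      have q0: "0 < p n" using elim kpos by linarith
      have qh: "p n \<le> 1 / 2" using elim by simp
      interpret g: gs n "p n" using q0 qh n2 by unfold_locales auto
      have nqk: "2 * real k ^ 2 \<le> real n * p n"
      proof -
        have "c0 * real k ^ 2 \<le> real n * p n" using elim n2 by (simp add: divide_le_eq mult.commute)
        moreover have "2 * real k ^ 2 \<le> c0 * real k ^ 2" using c0 by (intro mult_right_mono) auto
        ultimately show ?thesis by linarith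
      qed
      have eqT: "1 / 512 * real n powr (3/2) * p n powr (1/2) = real n * sqrt (real n * p n) / 512"
      proof -
        have "real n powr (3/2) = real n * sqrt (real n)"
        proof -
          have "real n powr (3/2) = real n powr (1 + 1/2)" by simp
          also have "\<dots> = real n powr 1 * real n powr (1/2)" using n2 by (subst powr_add) auto
          finally show ?thesis using n2 by (simp add: powr_half_sqrt)
        qed
        moreover have "p n powr (1/2) = sqrt (p n)" using q0 by (simp add: powr_half_sqrt)
        ultimately show ?thesis by (simp add: real_sqrt_mult)
      qed
      have "1 - err n \<le> measure_pmf.prob (gnp n (p n))
          {G. (1 - 1 / real k) * real (n choose 2) * p n + real n * sqrt (real n * p n) / 512 \<le> SDP n k G}"
        using g.main_prob[OF k nqk] unfolding err_def K_def gnp_def .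
      thus ?case unfolding P_def eqT by simp
    qed
    have upper: "\<forall>\<^sub>F n in sequentially. P n \<le> 1" by (simp add: P_def)
    have l1: "(\<lambda>n. 1 - err n) \<longlonglongrightarrow> 1" using tendsto_diff[OF tendsto_const err0, of 1] by simp
    show "P \<longlonglongrightarrow> 1"
      by (rule tendsto_sandwich[OF lower upper l1 tendsto_const])
  qed simp
qed simp

end
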